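(* Let $1<p<p_0<\infty$ and let $f,g$ be nonnegative sequences on $\mathbb{Z}_+$. Assume there is a positive increasing function $\varphi_{p_0}$ on $[1,\infty)$ such that for every $w_0\in\mathcal{A}_{p_0}$, $$\Big(\sum_{k=1}^\infty w_0(k)f(k)^{p_0}\Big)^{1/p_0}\le\varphi_{p_0}\big([w_0]_{\mathcal{A}_{p_0}}\big)\Big(\sum_{k=1}^\infty w_0(k)g(k)^{p_0}\Big)^{1/p_0}.$$ Then for every $w\in\mathcal{A}_p$ with $f\in\ell^p(w)$, $$\Big(\sum_{k=1}^\infty w(k)f(k)^{p}\Big)^{1/p}\le 2^{\frac{p_0-p}{p_0}}\,\varphi_{p_0}\Big(\big(2\|\mathcal{M}\|_{\ell^p(w)}\big)^{p_0-p}[w]_{\mathcal{A}_p}\Big)\Big(\sum_{k=1}^\infty w(k)g(k)^{p}\Big)^{1/p}.$$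
   Context: Throughout, a weight is a sequence $w=\{w(k)\}_{k\ge 1}$ of strictly positive real numbers indexed by $\mathbb{Z}_+=\{1,2,\dots\}$. For $1\le q<\infty$ and a weight $v$, $\ell^q(v)$ is the space of real sequences $f$ with $\|f\|_{\ell^q(v)}=\big(\sum_{k\ge1}v(k)|f(k)|^q\big)^{1/q}<\infty$. The discrete Hardy–Littlewood maximal operator is $\mathcal{M}f(k)=\sup_{n\ge k}\frac1n\sum_{j=1}^n|f(j)|$, $k\in\mathbb{Z}_+$. For $1<q<\infty$, a weight $w$ belongs to $\mathcal{A}_q$ iff $[w]_{\mathcal{A}_q}:=\sup_{n\ge1}\big(\frac1n\sum_{k=1}^n w(k)\big)\big(\frac1n\sum_{k=1}^n w(k)^{-1/(q-1)}\big)^{q-1}<\infty$. $\|\mathcal{M}\|_{\ell^q(v)}$ denotes the operator norm $\sup\{\|\mathcal{M}f\|_{\ell^q(v)}:\|f\|_{\ell^q(v)}\le1\}$; it is known to be finite when $v\in\mathcal{A}_q$. *)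

theory Defs
  imports "HOL-Analysis.Analysis"
begin

text \<open>Sequences and weights on Z_+ = {1,2,...} are modelled as functions nat => real;
  the value at index 0 is ignored throughout.\<close>

definition is_weight :: "(nat \<Rightarrow> real) \<Rightarrow> bool" where
  "is_weight w \<longleftrightarrow> (\<forall>k\<ge>1. w k > 0)"

definition wnorm :: "real \<Rightarrow> (nat \<Rightarrow> real) \<Rightarrow> (nat \<Rightarrow> real) \<Rightarrow> ereal" where
  "wnorm q v f =
     (if summable (\<lambda>k. v (Suc k) * \<bar>f (Suc k)\<bar> powr q)
      then ereal ((\<Sum>k. v (Suc k) * \<bar>f (Suc k)\<bar> powr q) powr (1 / q))
      else \<infinity>)"

definition avg :: "(nat \<Rightarrow> real) \<Rightarrow> nat \<Rightarrow> real" where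
  "avg f n = (\<Sum>j=1..n. \<bar>f j\<bar>) / real n"

definition maxop :: "(nat \<Rightarrow> real) \<Rightarrow> nat \<Rightarrow> real" where
  "maxop f k = (SUP n\<in>{k..}. avg f n)"

text \<open>Operator norm of M on l^q(v) (extended real; infinite if M f is not
  even finite-valued for some admissible f).\<close>
definition maxop_norm :: "real \<Rightarrow> (nat \<Rightarrow> real) \<Rightarrow> ereal" where
  "maxop_norm q v =
     (SUP f\<in>{f. wnorm q v f \<le> 1}.
        (if (\<forall>k\<ge>1. bdd_above (avg f ` {k..})) then wnorm q v (maxop f) else \<infinity>))"

definition Ap_const :: "real \<Rightarrow> (nat \<Rightarrow> real) \<Rightarrow> ereal" where
  "Ap_const q w =
     (SUP n\<in>{1..}. ereal (((\<Sum>k=1..n. w k) / real n) *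
        ((\<Sum>k=1..n. w k powr (- 1 / (q - 1))) / real n) powr (q - 1)))"

definition in_Ap :: "real \<Rightarrow> (nat \<Rightarrow> real) \<Rightarrow> bool" where
  "in_Ap q w \<longleftrightarrow> is_weight w \<and> Ap_const q w < \<infinity>"

end

theory Submission
  imports Defs
begin


lemma HT:
  fixes x y :: "'a \<Rightarrow> real"
  assumes "finite I" "\<And>i. i \<in> I \<Longrightarrow> x i \<ge> 0" "\<And>i. i \<in> I \<Longrightarrow> y i \<ge> 0"
    and "0 < t" "t < 1"
  shows "(\<Sum>i\<in>I. x i powr t * y i powr (1 - t)) \<le> (\<Sum>i\<in>I. x i) powr t * (\<Sum>i\<in>I. y i) powr (1 - t)"
proof -
  define X where "X = (\<Sum>i\<in>I. x i)"
  define Y where "Y = (\<Sum>i\<in>I. y i)"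
  have X0: "X \<ge> 0" unfolding X_def using assms by (simp add: sum_nonneg)
  have Y0: "Y \<ge> 0" unfolding Y_def using assms by (simp add: sum_nonneg)
  show ?thesis
  proof (cases "X = 0 \<or> Y = 0")
    case True
    then have "\<forall>i\<in>I. x i powr t * y i powr (1 - t) = 0"
      using assms sum_nonneg_eq_0_iff[of I x] sum_nonneg_eq_0_iff[of I y] unfolding X_def Y_def
      by auto
    then have "(\<Sum>i\<in>I. x i powr t * y i powr (1 - t)) = 0" by (intro sum.neutral) auto
    then show ?thesis unfolding X_def[symmetric] Y_def[symmetric] using X0 Y0 by simp
  next
    case False
    then have Xp: "X > 0" and Yp: "Y > 0" using X0 Y0 by auto
    have "x i powr t * y i powr (1 - t) \<le> (X powr t * Y powr (1 - t)) * (t * (x i / X) + (1 - t) * (y i / Y))"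
      if "i \<in> I" for i
    proof (cases "x i = 0 \<or> y i = 0")
      case True
      then show ?thesis using assms that Xp Yp by (auto intro!: mult_nonneg_nonneg add_nonneg_nonneg)
    next
      case False
      then have xp: "x i > 0" and yp: "y i > 0" using assms that by (auto simp: order_le_less)
      have "(x i / X) powr t * (y i / Y) powr (1 - t) \<le> t * (x i / X) + (1 - t) * (y i / Y)"
        using Youngs_inequality_0[of t "1 - t" "x i / X" "y i / Y"] assms xp yp Xp Yp by auto
      moreover have "(x i / X) powr t * (y i / Y) powr (1 - t) = x i powr t * y i powr (1 - t) / (X powr t * Y powr (1 - t))"
        using xp yp Xp Yp by (simp add: powr_divide)
      ultimately show ?thesis using Xp Yp by (simp add: divide_le_eq mult.commute)
    qed
    then have "(\<Sum>i\<in>I. x i powr t * y i powr (1 - t)) \<le> (\<Sum>i\<in>I. (X powr t * Y powr (1 - t)) * (t * (x i / X) + (1 - t) * (y i / Y)))"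
      by (rule sum_mono)
    also have "\<dots> = (\<Sum>i\<in>I. (X powr t * Y powr (1 - t) * t / X) * x i + (X powr t * Y powr (1 - t) * (1 - t) / Y) * y i)"
      by (rule sum.cong) (auto simp: field_simps)
    also have "\<dots> = (X powr t * Y powr (1 - t) * t / X) * (\<Sum>i\<in>I. x i) + (X powr t * Y powr (1 - t) * (1 - t) / Y) * (\<Sum>i\<in>I. y i)"
      unfolding sum.distrib sum_distrib_left ..
    also have "\<dots> = (X powr t * Y powr (1 - t)) * (t * (\<Sum>i\<in>I. x i) / X + (1 - t) * (\<Sum>i\<in>I. y i) / Y)"
      by (simp add: field_simps)
    also have "\<dots> = X powr t * Y powr (1 - t)" using Xp Yp unfolding X_def Y_def by simp
    finally show ?thesis unfolding X_def Y_def .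
  qed
qed

lemma pw_split:
  fixes c a p :: real
  assumes "c \<ge> 0" "a \<ge> 0" "p > 0"
  shows "c * a = (c * a powr p) powr (1 / p) * c powr (1 - 1 / p)"
proof (cases "c = 0")
  case True then show ?thesis by simp
next
  case False
  then have cp: "c > 0" using assms by simp
  have "(c * a powr p) powr (1 / p) = c powr (1/p) * a"
    using assms cp by (simp add: powr_mult powr_powr)
  moreover have "c powr (1/p) * c powr (1 - 1/p) = c" using cp by (simp add: powr_add[symmetric])
  ultimately show ?thesis by (simp add: algebra_simps)
qed

lemma pow_combine:
  fixes a b p :: real
  assumes "a \<ge> 0" "b \<ge> 0" "p > 0"
  shows "(a powr (1/p) * b powr (1 - 1/p)) powr p = a * b powr (p - 1)"
proof -
  have "(a powr (1/p) * b powr (1 - 1/p)) powr p = (a powr (1/p)) powr p * (b powr (1 - 1/p)) powr p"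
    using assms by (simp add: powr_mult)
  also have "\<dots> = a powr (1/p * p) * b powr ((1 - 1/p) * p)" by (simp add: powr_powr)
  also have "1/p * p = 1" "(1 - 1/p) * p = p - 1" using assms by (auto simp: field_simps)
  ultimately show ?thesis using assms by simp
qed

lemma Jensen_sum:
  fixes c a :: "'a \<Rightarrow> real"
  assumes "finite I" "\<And>i. i \<in> I \<Longrightarrow> c i \<ge> 0" "\<And>i. i \<in> I \<Longrightarrow> a i \<ge> 0" "p > 1"
  shows "(\<Sum>i\<in>I. c i * a i) powr p \<le> (\<Sum>i\<in>I. c i) powr (p - 1) * (\<Sum>i\<in>I. c i * a i powr p)"
proof -
  have "(\<Sum>i\<in>I. c i * a i) = (\<Sum>i\<in>I. (c i * a i powr p) powr (1/p) * c i powr (1 - 1/p))"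
    using assms by (intro sum.cong) (auto intro!: pw_split)
  also have "\<dots> \<le> (\<Sum>i\<in>I. c i * a i powr p) powr (1/p) * (\<Sum>i\<in>I. c i) powr (1 - 1/p)"
    using assms by (intro HT) auto
  finally have le: "(\<Sum>i\<in>I. c i * a i) \<le> (\<Sum>i\<in>I. c i * a i powr p) powr (1/p) * (\<Sum>i\<in>I. c i) powr (1 - 1/p)" .
  have s0: "(\<Sum>i\<in>I. c i * a i) \<ge> 0" using assms by (auto intro!: sum_nonneg)
  have s1: "(\<Sum>i\<in>I. c i * a i powr p) \<ge> 0" using assms by (auto intro!: sum_nonneg)
  have s2: "(\<Sum>i\<in>I. c i) \<ge> 0" using assms by (auto intro!: sum_nonneg)
  have "(\<Sum>i\<in>I. c i * a i) powr p \<le> ((\<Sum>i\<in>I. c i * a i powr p) powr (1/p) * (\<Sum>i\<in>I. c i) powr (1 - 1/p)) powr p"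
    using le s0 assms by (intro powr_mono2) auto
  also have "\<dots> = (\<Sum>i\<in>I. c i * a i powr p) * (\<Sum>i\<in>I. c i) powr (p - 1)"
    using s1 s2 assms by (intro pow_combine) auto
  finally show ?thesis by (simp add: mult.commute)
qed

definition sig :: "real \<Rightarrow> (nat \<Rightarrow> real) \<Rightarrow> nat \<Rightarrow> real" where
  "sig q w k = w k powr (- 1 / (q - 1))"

lemma holder_count:
  assumes "finite I" "I \<subseteq> {1..}" "is_weight w" "p > 1"
  shows "real (card I) powr p \<le> (\<Sum>k\<in>I. w k) * (\<Sum>k\<in>I. sig p w k) powr (p - 1)"
proof -
  have wp: "k \<in> I \<Longrightarrow> w k > 0" for k using assms unfolding is_weight_def by auto
  have one: "w k powr (1/p) * sig p w k powr (1 - 1/p) = 1" if "k \<in> I" for k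
  proof -
    have "sig p w k powr (1 - 1/p) = w k powr (- 1 / (p - 1) * (1 - 1/p))"
      unfolding sig_def using wp[OF that] by (simp add: powr_powr)
    also have "- 1 / (p - 1) * (1 - 1/p) = - (1/p)" using assms by (simp add: field_simps)
    finally show ?thesis using wp[OF that] by (simp add: powr_add[symmetric])
  qed
  have "real (card I) = (\<Sum>k\<in>I. w k powr (1/p) * sig p w k powr (1 - 1/p))"
    using one by simp
  also have "\<dots> \<le> (\<Sum>k\<in>I. w k) powr (1/p) * (\<Sum>k\<in>I. sig p w k) powr (1 - 1/p)"
    using assms wp by (intro HT) (auto simp: sig_def less_imp_le)
  finally have le: "real (card I) \<le> \<dots>" .
  have s1: "(\<Sum>k\<in>I. w k) \<ge> 0" by (rule sum_nonneg) (use wp in \<open>simp add: less_imp_le\<close>)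
  have s2: "(\<Sum>k\<in>I. sig p w k) \<ge> 0" by (auto intro!: sum_nonneg simp: sig_def)
  have "real (card I) powr p \<le> ((\<Sum>k\<in>I. w k) powr (1/p) * (\<Sum>k\<in>I. sig p w k) powr (1 - 1/p)) powr p"
    using le assms by (intro powr_mono2) auto
  also have "\<dots> = (\<Sum>k\<in>I. w k) * (\<Sum>k\<in>I. sig p w k) powr (p - 1)"
    using s1 s2 assms by (intro pow_combine) auto
  finally show ?thesis .
qed

lemma Ap_term_le:
  assumes "n \<ge> 1"
  shows "ereal (((\<Sum>k=1..n. w k) / real n) * ((\<Sum>k=1..n. sig q w k) / real n) powr (q - 1)) \<le> Ap_const q w"
  unfolding Ap_const_def sig_def using assms by (intro SUP_upper) auto

lemma Ap_ge1:
  assumes "is_weight w" "q > 1"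
  shows "Ap_const q w \<ge> 1"
proof -
  have w1: "w 1 > 0" using assms unfolding is_weight_def by auto
  have "(w 1 powr (- 1 / (q - 1))) powr (q - 1) = w 1 powr (-1)"
    using w1 assms by (simp add: powr_powr)
  then have "((\<Sum>k=1..1. w k) / real 1) * ((\<Sum>k=1..1. sig q w k) / real 1) powr (q - 1) = 1"
    using w1 by (simp add: sig_def powr_minus)
  then show ?thesis using Ap_term_le[of 1 w q] by (simp add: one_ereal_def)
qed

lemma Ap_real:
  assumes "in_Ap q w" "q > 1"
  shows "Ap_const q w = ereal (real_of_ereal (Ap_const q w))" "real_of_ereal (Ap_const q w) \<ge> 1"
proof -
  have "Ap_const q w \<ge> 1" "Ap_const q w < \<infinity>" using assms Ap_ge1 unfolding in_Ap_def by auto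
  then show "Ap_const q w = ereal (real_of_ereal (Ap_const q w))" "real_of_ereal (Ap_const q w) \<ge> 1"
    by (cases "Ap_const q w"; auto)+
qed

lemma Ap_le:
  assumes "in_Ap q w" "q > 1" "n \<ge> 1"
  shows "((\<Sum>k=1..n. w k) / real n) * ((\<Sum>k=1..n. sig q w k) / real n) powr (q - 1) \<le> real_of_ereal (Ap_const q w)"
  using Ap_term_le[OF assms(3), of w q] Ap_real[OF assms(1,2)] by (metis ereal_less_eq(3))


lemma sum_dyadic:
  fixes g :: "nat \<Rightarrow> real"
  shows "(\<Sum>k\<in>{1..<2^n}. g k) = (\<Sum>i<n. \<Sum>k\<in>{2^i..<2^(Suc i)}. g k)"
proof (induction n)
  case 0 then show ?case by simp
next
  case (Suc n)
  have "(\<Sum>k\<in>{1..<2^Suc n}. g k) = (\<Sum>k\<in>{1..<2^n}. g k) + (\<Sum>k\<in>{2^n..<2^(Suc n)}. g k)"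
    by (rule sum.atLeastLessThan_concat[symmetric]) auto
  then show ?case using Suc by simp
qed

lemma geo_fin:
  fixes r :: real
  assumes "0 \<le> r" "r < 1" "finite J"
  shows "(\<Sum>j\<in>J. r ^ j) \<le> 1 / (1 - r)"
proof -
  have "(\<Sum>j\<in>J. r ^ j) \<le> (\<Sum>j. r ^ j)"
    using assms by (intro sum_le_suminf summable_geometric) auto
  then show ?thesis using assms suminf_geometric[of r] by simp
qed

definition dd :: "nat \<Rightarrow> nat \<Rightarrow> nat" where "dd m i = (m - i) + (i - m)"

lemma geo_dd:
  fixes r :: real
  assumes "0 \<le> r" "r < 1" "finite I"
  shows "(\<Sum>i\<in>I. r ^ dd m i) \<le> 2 / (1 - r)"
proof -
  let ?I1 = "{i\<in>I. i \<le> m}" and ?I2 = "{i\<in>I. \<not> i \<le> m}"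
  have "(\<Sum>i\<in>I. r ^ dd m i) = (\<Sum>i\<in>?I1. r ^ dd m i) + (\<Sum>i\<in>?I2. r ^ dd m i)"
  proof -
    have eq: "?I1 \<union> ?I2 = I" by auto
    have "(\<Sum>i\<in>?I1 \<union> ?I2. r ^ dd m i) = (\<Sum>i\<in>?I1. r ^ dd m i) + (\<Sum>i\<in>?I2. r ^ dd m i)"
      using assms by (intro sum.union_disjoint) auto
    then show ?thesis unfolding eq .
  qed
  also have "(\<Sum>i\<in>?I1. r ^ dd m i) = (\<Sum>i\<in>?I1. r ^ (m - i))"
    by (intro sum.cong) (auto simp: dd_def)
  also have "\<dots> = (\<Sum>j\<in>(\<lambda>i. m - i) ` ?I1. r ^ j)"
    by (subst sum.reindex) (auto simp: inj_on_def)
  also have "\<dots> \<le> 1 / (1 - r)" using assms by (intro geo_fin) auto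
  also have "(\<Sum>i\<in>?I2. r ^ dd m i) = (\<Sum>i\<in>?I2. r ^ (i - m))"
    by (intro sum.cong) (auto simp: dd_def)
  also have "\<dots> = (\<Sum>j\<in>(\<lambda>i. i - m) ` ?I2. r ^ j)"
    by (subst sum.reindex) (auto simp: inj_on_def)
  also have "\<dots> \<le> 1 / (1 - r)" using assms by (intro geo_fin) auto
  finally show ?thesis by simp
qed

definition Wu :: "(nat \<Rightarrow> real) \<Rightarrow> nat \<Rightarrow> real" where "Wu w i = (\<Sum>k\<in>{1..<2^Suc i}. w k)"
definition Su :: "real \<Rightarrow> (nat \<Rightarrow> real) \<Rightarrow> nat \<Rightarrow> real" where "Su p w i = (\<Sum>k\<in>{1..<2^Suc i}. sig p w k)"
definition Wb :: "(nat \<Rightarrow> real) \<Rightarrow> nat \<Rightarrow> real" where "Wb w i = (\<Sum>k\<in>{2^i..<2^Suc i}. w k)"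
definition Sb :: "real \<Rightarrow> (nat \<Rightarrow> real) \<Rightarrow> nat \<Rightarrow> real" where "Sb p w i = (\<Sum>k\<in>{2^i..<2^Suc i}. sig p w k)"

lemma B_sub: "{2^i..<2^Suc i} \<subseteq> {1::nat..}"
proof
  fix x :: nat assume "x \<in> {2^i..<2^Suc i}"
  moreover have "(1::nat) \<le> 2^i" by simp
  ultimately show "x \<in> {1..}" by auto
qed

lemma Wu_split: "Wu w (Suc i) = Wu w i + Wb w (Suc i)"
  unfolding Wu_def Wb_def by (rule sum.atLeastLessThan_concat[symmetric]) auto
lemma Su_split: "Su p w (Suc i) = Su p w i + Sb p w (Suc i)"
  unfolding Su_def Sb_def by (rule sum.atLeastLessThan_concat[symmetric]) auto

context
  fixes p :: real and w :: "nat \<Rightarrow> real"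
  assumes p1: "p > 1" and wA: "in_Ap p w"
begin

lemma wpos: "k \<ge> 1 \<Longrightarrow> w k > 0"
  using wA unfolding in_Ap_def is_weight_def by auto

lemma Wpos: "finite I \<Longrightarrow> I \<subseteq> {1..} \<Longrightarrow> I \<noteq> {} \<Longrightarrow> (\<Sum>k\<in>I. w k) > 0"
  by (rule sum_pos) (auto intro!: wpos simp: subset_eq)

lemma Spos: "finite I \<Longrightarrow> I \<subseteq> {1..} \<Longrightarrow> I \<noteq> {} \<Longrightarrow> (\<Sum>k\<in>I. sig p w k) > 0"
proof (rule sum_pos)
  fix i assume "finite I" "I \<subseteq> {1..}" "i \<in> I"
  then have "w i > 0" by (intro wpos) auto
  then show "sig p w i > 0" by (simp add: sig_def)
qed auto

lemma Wnn: "(\<Sum>k\<in>I. w k) \<ge> 0" if "I \<subseteq> {1..}"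
  by (rule sum_nonneg) (use that wpos in \<open>force intro: less_imp_le\<close>)

lemma Snn: "(\<Sum>k\<in>I. sig p w k) \<ge> 0"
  by (rule sum_nonneg) (simp add: sig_def)

lemma ApU:
  "(\<Sum>k\<in>{1..<2^Suc i}. w k) * (\<Sum>k\<in>{1..<2^Suc i}. sig p w k) powr (p - 1)
     \<le> real_of_ereal (Ap_const p w) * real (2^Suc i) powr p"
proof -
  define n :: nat where "n = 2^Suc i - 1"
  have pos: "(0::nat) < 2^i" by simp
  have n1: "n \<ge> 1" unfolding n_def power_Suc using pos by linarith
  have set: "{1..<2^Suc i} = {1..n}" unfolding n_def by auto
  define W where "W = (\<Sum>k\<in>{1..n}. w k)"
  define S where "S = (\<Sum>k\<in>{1..n}. sig p w k)"
  have S0: "S \<ge> 0" unfolding S_def by (rule Snn)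
  have W0: "W \<ge> 0" unfolding W_def by (rule Wnn) auto
  have np: "real n > 0" using n1 by simp
  define X where "X = (W / real n) * (S / real n) powr (p - 1)"
  have XA: "X \<le> real_of_ereal (Ap_const p w)"
    unfolding X_def W_def S_def using Ap_le[OF wA p1 n1] by simp
  have "X = W * S powr (p - 1) / real n powr p"
  proof -
    have "real n powr p = real n * real n powr (p - 1)"
      using np by (simp add: powr_diff)
    then show ?thesis unfolding X_def using S0 np by (simp add: powr_divide)
  qed
  then have "W * S powr (p - 1) = X * real n powr p" using np by simp
  also have "\<dots> \<le> real_of_ereal (Ap_const p w) * real n powr p"
    using XA by (intro mult_right_mono) auto
  also have "\<dots> \<le> real_of_ereal (Ap_const p w) * real (2^Suc i) powr p"
  proof -
    have "real n \<le> real (2^Suc i)" unfolding n_def by (intro of_nat_mono) simp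
    then show ?thesis using Ap_real[OF wA p1] p1 by (intro mult_left_mono powr_mono2) auto
  qed
  finally show ?thesis unfolding W_def S_def set .
qed

lemma holdB:
  "real (2^i) powr p \<le> (\<Sum>k\<in>{2^i..<2^Suc i}. w k) * (\<Sum>k\<in>{2^i..<2^Suc i}. sig p w k) powr (p - 1)"
proof -
  have "card {(2::nat)^i..<2^Suc i} = 2^i" by simp
  moreover have "{2^i..<2^Suc i} \<subseteq> {1::nat..}" by (rule B_sub)
  ultimately show ?thesis
    using holder_count[of "{2^i..<2^Suc i}" w p] wA p1 unfolding in_Ap_def by simp
qed

abbreviation "AA \<equiv> real_of_ereal (Ap_const p w)"

lemma AA1: "AA \<ge> 1" using Ap_real[OF wA p1] by simp

lemma two_pow: "Suc 0 < 2 * (2::nat)^i"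
proof -
  have "(1::nat) \<le> 2^i" by simp
  then show ?thesis by linarith
qed
lemma wnn: "k \<ge> 1 \<Longrightarrow> w k \<ge> 0" using wpos less_imp_le by blast
lemma Wu_pos: "Wu w i > 0" unfolding Wu_def by (rule Wpos) (use two_pow in auto)
lemma Su_pos: "Su p w i > 0" unfolding Su_def by (rule Spos) (use two_pow in auto)
lemma Wb_pos: "Wb w i > 0" unfolding Wb_def by (rule Wpos) (use B_sub in auto)
lemma Sb_pos: "Sb p w i > 0" unfolding Sb_def by (rule Spos) (use B_sub in auto)
lemma Wb_le: "Wb w i \<le> Wu w i"
  unfolding Wb_def Wu_def by (rule sum_mono2) (use B_sub wnn in auto)
lemma Sb_le: "Sb p w i \<le> Su p w i"
  unfolding Sb_def Su_def by (rule sum_mono2) (auto simp: sig_def)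

lemma ApU': "Wu w i * Su p w i powr (p - 1) \<le> AA * real (2^Suc i) powr p"
  using ApU unfolding Wu_def Su_def by simp

lemma holdB': "real (2^i) powr p \<le> Wb w i * Sb p w i powr (p - 1)"
  using holdB unfolding Wb_def Sb_def by simp

lemma pow2_step: "real (2^Suc (Suc i)) powr p = 2 powr p * real (2^Suc i) powr p"
proof -
  have e: "real (2^Suc (Suc i)) = 2 * real (2^Suc i)" by simp
  show ?thesis unfolding e by (metis powr_mult of_nat_0_le_iff zero_le_numeral)
qed

lemma Wb_big: "Wu w (Suc i) \<le> AA * 2 powr p * Wb w (Suc i)"
proof -
  have sp: "Su p w (Suc i) powr (p - 1) > 0" using Su_pos[of "Suc i"] by simp
  have "Wu w (Suc i) * Su p w (Suc i) powr (p - 1) \<le> AA * (2 powr p * real (2^Suc i) powr p)"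
    using ApU'[of "Suc i"] pow2_step by simp
  also have "\<dots> \<le> AA * (2 powr p * (Wb w (Suc i) * Sb p w (Suc i) powr (p - 1)))"
    using holdB'[of "Suc i"] AA1 by (intro mult_left_mono) auto
  also have "\<dots> \<le> AA * (2 powr p * (Wb w (Suc i) * Su p w (Suc i) powr (p - 1)))"
    using AA1 Sb_le[of "Suc i"] Sb_pos[of "Suc i"] Wb_pos[of "Suc i"] p1
    by (intro mult_left_mono powr_mono2) auto
  finally have "Wu w (Suc i) * Su p w (Suc i) powr (p - 1) \<le> (AA * 2 powr p * Wb w (Suc i)) * Su p w (Suc i) powr (p - 1)"
    by (simp add: algebra_simps)
  then show ?thesis using sp by (simp add: Su_pos)
qed

lemma Sb_big: "Su p w (Suc i) powr (p - 1) \<le> AA * 2 powr p * Sb p w (Suc i) powr (p - 1)"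
proof -
  have sp: "Wu w (Suc i) > 0" using Wu_pos by simp
  have "Wu w (Suc i) * Su p w (Suc i) powr (p - 1) \<le> AA * (2 powr p * real (2^Suc i) powr p)"
    using ApU'[of "Suc i"] pow2_step by simp
  also have "\<dots> \<le> AA * (2 powr p * (Wb w (Suc i) * Sb p w (Suc i) powr (p - 1)))"
    using holdB'[of "Suc i"] AA1 by (intro mult_left_mono) auto
  also have "\<dots> \<le> AA * (2 powr p * (Wu w (Suc i) * Sb p w (Suc i) powr (p - 1)))"
    using AA1 Wb_le[of "Suc i"]
    by (intro mult_left_mono mult_right_mono) auto
  finally have "Wu w (Suc i) * Su p w (Suc i) powr (p - 1) \<le> Wu w (Suc i) * (AA * 2 powr p * Sb p w (Suc i) powr (p - 1))"
    by (simp add: algebra_simps)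
  then show ?thesis using sp by simp
qed

definition "dl = (AA * 2 powr p) powr (- 1 / (p - 1))"

lemma c1: "1 \<le> AA * 2 powr p"
proof -
  have "1 \<le> 2 powr p" using p1 by (intro ge_one_powr_ge_zero) auto
  then show ?thesis using mult_mono[of 1 AA 1 "2 powr p"] AA1 by simp
qed
lemma dl_pos: "dl > 0" unfolding dl_def using AA1 by simp
lemma dl_le1: "dl \<le> 1"
proof -
  note c1
  then have "(AA * 2 powr p) powr (- 1 / (p - 1)) \<le> (AA * 2 powr p) powr 0"
    using p1 by (intro powr_mono) auto
  then show ?thesis unfolding dl_def using AA1 by simp
qed

lemma Su_growth: "Su p w i \<le> (1 - dl) * Su p w (Suc i)"
proof -
  have c: "AA * 2 powr p > 0" using AA1 by simp
  have "Su p w (Suc i) = (Su p w (Suc i) powr (p - 1)) powr (1 / (p - 1))"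
    using p1 Su_pos[of "Suc i"] by (simp add: powr_powr)
  also have "\<dots> \<le> (AA * 2 powr p * Sb p w (Suc i) powr (p - 1)) powr (1 / (p - 1))"
    using Sb_big p1 by (intro powr_mono2) auto
  also have "\<dots> = (AA * 2 powr p) powr (1 / (p - 1)) * Sb p w (Suc i)"
    using p1 c Sb_pos[of "Suc i"] by (simp add: powr_mult powr_powr)
  finally have "Su p w (Suc i) \<le> (AA * 2 powr p) powr (1 / (p - 1)) * Sb p w (Suc i)" .
  then have "dl * Su p w (Suc i) \<le> dl * ((AA * 2 powr p) powr (1 / (p - 1)) * Sb p w (Suc i))"
    using dl_pos by (intro mult_left_mono) auto
  also have "dl * ((AA * 2 powr p) powr (1 / (p - 1)) * Sb p w (Suc i)) = Sb p w (Suc i)"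
    unfolding dl_def using c AA1 by (simp add: powr_add[symmetric] mult.assoc[symmetric])
  finally show ?thesis using Su_split[of p w i] by (simp add: algebra_simps)
qed

lemma Wu_growth: "Wu w i \<le> (1 - 1 / (AA * 2 powr p)) * Wu w (Suc i)"
proof -
  have c: "AA * 2 powr p > 0" using AA1 by simp
  have "Wu w (Suc i) / (AA * 2 powr p) \<le> Wb w (Suc i)"
    using Wb_big c by (simp add: divide_le_eq mult.commute)
  then show ?thesis using Wu_split[of w i] by (simp add: algebra_simps)
qed

lemma pow2_step': "real (2^Suc j) powr p = 2 powr p * real (2^j) powr p"
proof -
  have e: "real (2^Suc j) = 2 * real (2^j)" by simp
  show ?thesis unfolding e by (metis powr_mult of_nat_0_le_iff zero_le_numeral)
qed

definition "lam = max (max ((1 - dl) powr (p - 1)) (1 - 1/(AA * 2 powr p))) (1/2)"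

lemma lam_ge: "lam \<ge> 1/2" unfolding lam_def by simp
lemma lam_lt1: "lam < 1"
proof -
  have "(1 - dl) powr (p - 1) < 1 powr (p - 1)"
    using dl_pos dl_le1 p1 by (intro powr_less_mono2) auto
  moreover have "1 - 1/(AA * 2 powr p) < 1" using c1 by simp
  ultimately show ?thesis unfolding lam_def by simp
qed

lemma Su_step: "Su p w i powr (p - 1) \<le> lam * Su p w (Suc i) powr (p - 1)"
proof -
  have "Su p w i powr (p - 1) \<le> ((1 - dl) * Su p w (Suc i)) powr (p - 1)"
    using Su_growth Su_pos p1 by (intro powr_mono2) (auto intro: less_imp_le)
  also have "\<dots> = (1 - dl) powr (p - 1) * Su p w (Suc i) powr (p - 1)"
    using dl_le1 Su_pos[of "Suc i"] by (simp add: powr_mult)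
  also have "\<dots> \<le> lam * Su p w (Suc i) powr (p - 1)"
    unfolding lam_def by (intro mult_right_mono) auto
  finally show ?thesis .
qed

lemma Wu_step: "Wu w i \<le> lam * Wu w (Suc i)"
proof -
  have "Wu w i \<le> (1 - 1/(AA * 2 powr p)) * Wu w (Suc i)" by (rule Wu_growth)
  also have "\<dots> \<le> lam * Wu w (Suc i)"
    unfolding lam_def using Wu_pos[of "Suc i"] by (intro mult_right_mono) auto
  finally show ?thesis .
qed

lemma Su_iter: "i \<le> m \<Longrightarrow> Su p w i powr (p - 1) \<le> lam ^ (m - i) * Su p w m powr (p - 1)"
proof (induction m rule: dec_induct)
  case base then show ?case by simp
next
  case (step n)
  have "Su p w i powr (p - 1) \<le> lam ^ (n - i) * Su p w n powr (p - 1)" by (rule step.IH)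
  also have "\<dots> \<le> lam ^ (n - i) * (lam * Su p w (Suc n) powr (p - 1))"
    using Su_step lam_ge by (intro mult_left_mono) auto
  also have "\<dots> = lam ^ (Suc n - i) * Su p w (Suc n) powr (p - 1)"
    using step.hyps by (simp add: Suc_diff_le)
  finally show ?case .
qed

lemma Wu_iter: "i \<le> m \<Longrightarrow> Wu w i \<le> lam ^ (m - i) * Wu w m"
proof (induction m rule: dec_induct)
  case base then show ?case by simp
next
  case (step n)
  have "Wu w i \<le> lam ^ (n - i) * Wu w n" by (rule step.IH)
  also have "\<dots> \<le> lam ^ (n - i) * (lam * Wu w (Suc n))"
    using Wu_step lam_ge by (intro mult_left_mono) auto
  also have "\<dots> = lam ^ (Suc n - i) * Wu w (Suc n)"
    using step.hyps by (simp add: Suc_diff_le)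
  finally show ?case .
qed

lemma kernel_pow:
  "Wu w m * Su p w i powr (p - 1) / real (2^max m i) powr p \<le> AA * 2 powr p * lam ^ dd m i"
proof (cases "i \<le> m")
  case True
  have d: "dd m i = m - i" "max m i = m" using True by (auto simp: dd_def)
  have pos: "real (2^m) powr p > 0" by simp
  have "Wu w m * Su p w i powr (p - 1) \<le> Wu w m * (lam ^ (m - i) * Su p w m powr (p - 1))"
    using Su_iter[OF True] Wu_pos[of m] by (intro mult_left_mono) auto
  also have "\<dots> = lam ^ (m - i) * (Wu w m * Su p w m powr (p - 1))" by simp
  also have "\<dots> \<le> lam ^ (m - i) * (AA * (2 powr p * real (2^m) powr p))"
    using ApU'[of m] pow2_step'[of m] lam_ge by (intro mult_left_mono) auto
  finally show ?thesis unfolding d using pos by (simp add: divide_le_eq algebra_simps)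
next
  case False
  then have F: "m \<le> i" by simp
  have d: "dd m i = i - m" "max m i = i" using False by (auto simp: dd_def)
  have pos: "real (2^i) powr p > 0" by simp
  have "Wu w m * Su p w i powr (p - 1) \<le> (lam ^ (i - m) * Wu w i) * Su p w i powr (p - 1)"
    using Wu_iter[OF F] by (intro mult_right_mono) auto
  also have "\<dots> = lam ^ (i - m) * (Wu w i * Su p w i powr (p - 1))" by simp
  also have "\<dots> \<le> lam ^ (i - m) * (AA * (2 powr p * real (2^i) powr p))"
    using ApU'[of i] pow2_step'[of i] lam_ge by (intro mult_left_mono) auto
  finally show ?thesis unfolding d using pos by (simp add: divide_le_eq algebra_simps)
qed

lemma pow_nat_powr: "(x::real) \<ge> 0 \<Longrightarrow> (x ^ d) powr a = (x powr a) ^ d"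
proof (induction d)
  case 0 then show ?case by simp
next
  case (Suc d) then show ?case by (simp add: powr_mult)
qed

lemma root_pow: "x \<ge> 0 \<Longrightarrow> q > 0 \<Longrightarrow> (x powr (1/q)) powr q = (x::real)"
  by (simp add: powr_powr)

definition "rho = lam powr (1/p)"
definition "cc = (AA * 2 powr p) powr (1/p)"

lemma rho_lt1: "rho < 1" and rho_pos: "rho > 0"
proof -
  have "lam powr (1/p) < 1 powr (1/p)" using lam_lt1 lam_ge p1 by (intro powr_less_mono2) auto
  then show "rho < 1" unfolding rho_def by simp
  show "rho > 0" unfolding rho_def using lam_ge by simp
qed

lemma kernel:
  "Wb w m powr (1/p) * (Sb p w i powr (1 - 1/p) / real (2^max m i)) \<le> cc * rho ^ dd m i"
proof -
  define K where "K = Wb w m powr (1/p) * (Sb p w i powr (1 - 1/p) / real (2^max m i))"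
  have K0: "K \<ge> 0" unfolding K_def by simp
  have t0: "real (2^max m i) > 0" by simp
  have "K powr p = (Wb w m powr (1/p) * Sb p w i powr (1 - 1/p)) powr p / real (2^max m i) powr p"
    unfolding K_def using t0 by (simp add: powr_divide)
  also have "\<dots> = Wb w m * Sb p w i powr (p - 1) / real (2^max m i) powr p"
    using Wb_pos[of m] Sb_pos[of i] p1 by (subst pow_combine) auto
  also have "\<dots> \<le> Wu w m * Su p w i powr (p - 1) / real (2^max m i) powr p"
    using Wb_le[of m] Sb_le[of i] Sb_pos[of i] Wb_pos[of m] p1
    by (intro divide_right_mono mult_mono powr_mono2) auto
  also have "\<dots> \<le> AA * 2 powr p * lam ^ dd m i" by (rule kernel_pow)
  finally have Kp: "K powr p \<le> AA * 2 powr p * lam ^ dd m i" .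
  have "K = (K powr p) powr (1/p)" using K0 p1 by (simp add: powr_powr)
  also have "\<dots> \<le> (AA * 2 powr p * lam ^ dd m i) powr (1/p)"
    using Kp p1 by (intro powr_mono2) auto
  also have "\<dots> = cc * rho ^ dd m i"
    unfolding cc_def rho_def using AA1 lam_ge
    by (simp add: powr_mult pow_nat_powr)
  finally show ?thesis unfolding K_def .
qed

lemma block_holder:
  "(\<Sum>j\<in>{2^i..<2^Suc i}. \<bar>f j\<bar>) \<le>
     (\<Sum>j\<in>{2^i..<2^Suc i}. w j * \<bar>f j\<bar> powr p) powr (1/p) * Sb p w i powr (1 - 1/p)"
proof -
  have eq: "\<bar>f j\<bar> = (w j * \<bar>f j\<bar> powr p) powr (1/p) * sig p w j powr (1 - 1/p)"
    if "j \<in> {2^i..<2^Suc i}" for j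
  proof -
    have wj: "w j > 0" using that B_sub wpos by auto
    have "(w j * \<bar>f j\<bar> powr p) powr (1/p) = w j powr (1/p) * \<bar>f j\<bar>"
      using wj p1 by (simp add: powr_mult powr_powr)
    moreover have "sig p w j powr (1 - 1/p) = w j powr (- 1 / (p - 1) * (1 - 1/p))"
      unfolding sig_def using wj by (simp add: powr_powr)
    moreover have "- 1 / (p - 1) * (1 - 1/p) = - (1/p)" using p1 by (simp add: field_simps)
    ultimately show ?thesis using wj by (simp add: powr_minus field_simps)
  qed
  have "(\<Sum>j\<in>{2^i..<2^Suc i}. \<bar>f j\<bar>) = (\<Sum>j\<in>{2^i..<2^Suc i}. (w j * \<bar>f j\<bar> powr p) powr (1/p) * sig p w j powr (1 - 1/p))"
    using eq by (intro sum.cong) auto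
  also have "\<dots> \<le> (\<Sum>j\<in>{2^i..<2^Suc i}. w j * \<bar>f j\<bar> powr p) powr (1/p) * Sb p w i powr (1 - 1/p)"
    unfolding Sb_def using p1 B_sub wnn by (intro HT) (auto simp: sig_def)
  finally show ?thesis .
qed

lemma dd_sym: "dd m i = dd i m" unfolding dd_def by simp

lemma pow2_max_le: "j \<in> {2^i..<2^Suc i} \<Longrightarrow> k \<in> {2^m..<2^Suc m} \<Longrightarrow> (2::nat)^max m i \<le> max j k"
proof (cases "m \<le> i")
  case True
  assume "j \<in> {2^i..<2^Suc i}"
  then show ?thesis using True by (simp add: max_def)
next
  case False
  assume "k \<in> {2^m..<2^Suc m}"
  then show ?thesis using False by (simp add: max_def)
qed

definition "C0 = (2 / (1 - rho)) powr p * (AA * 2 powr p)"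

lemma main_fin:
  "(\<Sum>k\<in>{1..<2^Mb}. w k * (\<Sum>j\<in>{1..<2^L}. \<bar>f j\<bar> / real (max j k)) powr p)
     \<le> C0 * (\<Sum>j\<in>{1..<2^L}. w j * \<bar>f j\<bar> powr p)"
proof -
  define E where "E i = (\<Sum>j\<in>{2^i..<2^Suc i}. w j * \<bar>f j\<bar> powr p)" for i
  define F where "F i = (\<Sum>j\<in>{2^i..<2^Suc i}. \<bar>f j\<bar>)" for i
  define a where "a i = E i powr (1/p)" for i
  define T where "T k = (\<Sum>j\<in>{1..<2^L}. \<bar>f j\<bar> / real (max j k))" for k
  define Y where "Y m = (\<Sum>i<L. F i / real (2^max m i))" for m
  define D where "D = 2 / (1 - rho)"
  have D0: "D > 0" unfolding D_def using rho_lt1 by simp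
  have E0: "E i \<ge> 0" for i unfolding E_def using B_sub wnn by (intro sum_nonneg) (auto intro!: mult_nonneg_nonneg)
  have F0: "F i \<ge> 0" for i unfolding F_def by (intro sum_nonneg) auto
  have Y0: "Y m \<ge> 0" for m unfolding Y_def using F0 by (intro sum_nonneg) auto
  have T0: "T k \<ge> 0" for k unfolding T_def by (intro sum_nonneg) auto
  have step1: "T k \<le> Y m" if k: "k \<in> {2^m..<2^Suc m}" for k m
  proof -
    have "T k = (\<Sum>i<L. \<Sum>j\<in>{2^i..<2^Suc i}. \<bar>f j\<bar> / real (max j k))"
      unfolding T_def by (rule sum_dyadic)
    also have "\<dots> \<le> (\<Sum>i<L. \<Sum>j\<in>{2^i..<2^Suc i}. \<bar>f j\<bar> / real (2^max m i))"
    proof (intro sum_mono divide_left_mono)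
      fix i j :: nat assume "j \<in> {2^i..<2^Suc i}"
      then show "real (2^max m i) \<le> real (max j k)" using pow2_max_le[OF _ k] of_nat_mono by blast
    qed auto
    also have "\<dots> = Y m" unfolding Y_def F_def by (simp add: sum_divide_distrib)
    finally show ?thesis .
  qed
  have step2: "(\<Sum>k\<in>{2^m..<2^Suc m}. w k * T k powr p) \<le> Wb w m * Y m powr p" for m
  proof -
    have "(\<Sum>k\<in>{2^m..<2^Suc m}. w k * T k powr p) \<le> (\<Sum>k\<in>{2^m..<2^Suc m}. w k * Y m powr p)"
      using B_sub wnn step1 T0 p1 by (intro sum_mono mult_left_mono powr_mono2) auto
    also have "\<dots> = Wb w m * Y m powr p" unfolding Wb_def by (simp add: sum_distrib_right)
    finally show ?thesis .
  qed
  have step3: "Wb w m powr (1/p) * Y m \<le> (\<Sum>i<L. rho ^ dd m i * (cc * a i))" for m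
  proof -
    have "Wb w m powr (1/p) * Y m = (\<Sum>i<L. Wb w m powr (1/p) * (F i / real (2^max m i)))"
      unfolding Y_def by (simp add: sum_distrib_left)
    also have "\<dots> \<le> (\<Sum>i<L. a i * (Wb w m powr (1/p) * (Sb p w i powr (1 - 1/p) / real (2^max m i))))"
    proof (intro sum_mono)
      fix i
      have "F i \<le> a i * Sb p w i powr (1 - 1/p)" unfolding F_def a_def E_def by (rule block_holder)
      then have "F i / real (2^max m i) \<le> a i * Sb p w i powr (1 - 1/p) / real (2^max m i)"
        by (intro divide_right_mono) auto
      then have "Wb w m powr (1/p) * (F i / real (2^max m i)) \<le> Wb w m powr (1/p) * (a i * Sb p w i powr (1 - 1/p) / real (2^max m i))"
        by (intro mult_left_mono) auto
      also have "\<dots> = a i * (Wb w m powr (1/p) * (Sb p w i powr (1 - 1/p) / real (2^max m i)))"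
        by (simp add: field_simps)
      finally show "Wb w m powr (1/p) * (F i / real (2^max m i)) \<le> a i * (Wb w m powr (1/p) * (Sb p w i powr (1 - 1/p) / real (2^max m i)))" .
    qed
    also have "\<dots> \<le> (\<Sum>i<L. a i * (cc * rho ^ dd m i))"
      using kernel unfolding a_def by (intro sum_mono mult_left_mono) auto
    also have "\<dots> = (\<Sum>i<L. rho ^ dd m i * (cc * a i))" by (simp add: algebra_simps)
    finally show ?thesis .
  qed
  have cc0: "cc \<ge> 0" unfolding cc_def by simp
  have ccp: "(cc * a i) powr p = AA * 2 powr p * E i" for i
  proof -
    have "(cc * a i) powr p = cc powr p * a i powr p"
      unfolding cc_def a_def using E0[of i] by (simp add: powr_mult)
    also have "cc powr p = AA * 2 powr p" unfolding cc_def
      using root_pow[of "AA * 2 powr p" p] AA1 p1 by simp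
    also have "a i powr p = E i" unfolding a_def using root_pow[of "E i" p] E0[of i] p1 by simp
    finally show ?thesis .
  qed
  have step4: "(\<Sum>k\<in>{2^m..<2^Suc m}. w k * T k powr p) \<le> D powr (p - 1) * (\<Sum>i<L. rho ^ dd m i * (AA * 2 powr p * E i))" for m
  proof -
    have "Wb w m * Y m powr p = (Wb w m powr (1/p) * Y m) powr p"
      using Wb_pos[of m] Y0[of m] p1 by (simp add: powr_mult powr_powr)
    also have "\<dots> \<le> (\<Sum>i<L. rho ^ dd m i * (cc * a i)) powr p"
      using step3 Wb_pos[of m] Y0[of m] p1 by (intro powr_mono2) auto
    also have "\<dots> \<le> (\<Sum>i<L. rho ^ dd m i) powr (p - 1) * (\<Sum>i<L. rho ^ dd m i * (cc * a i) powr p)"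
      using rho_pos cc0 p1 unfolding a_def by (intro Jensen_sum) auto
    also have "\<dots> \<le> D powr (p - 1) * (\<Sum>i<L. rho ^ dd m i * (cc * a i) powr p)"
      using geo_dd[of rho "{..<L}" m] rho_pos rho_lt1 p1 unfolding D_def
      by (intro mult_right_mono powr_mono2 sum_nonneg) auto
    finally show ?thesis using step2[of m] ccp by simp
  qed
  have "(\<Sum>k\<in>{1..<2^Mb}. w k * T k powr p) = (\<Sum>m<Mb. \<Sum>k\<in>{2^m..<2^Suc m}. w k * T k powr p)"
    by (rule sum_dyadic)
  also have "\<dots> \<le> (\<Sum>m<Mb. D powr (p - 1) * (\<Sum>i<L. rho ^ dd m i * (AA * 2 powr p * E i)))"
    by (intro sum_mono step4)
  also have "\<dots> = D powr (p - 1) * (\<Sum>m<Mb. \<Sum>i<L. rho ^ dd m i * (AA * 2 powr p * E i))"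
    by (simp add: sum_distrib_left)
  also have "(\<Sum>m<Mb. \<Sum>i<L. rho ^ dd m i * (AA * 2 powr p * E i)) = (AA * 2 powr p) * (\<Sum>i<L. E i * (\<Sum>m<Mb. rho ^ dd i m))"
  proof -
    have "(\<Sum>m<Mb. \<Sum>i<L. rho ^ dd m i * (AA * 2 powr p * E i)) = (\<Sum>i<L. \<Sum>m<Mb. rho ^ dd m i * (AA * 2 powr p * E i))"
      by (rule sum.swap)
    also have "\<dots> = (\<Sum>i<L. (AA * 2 powr p) * (E i * (\<Sum>m<Mb. rho ^ dd i m)))"
      by (intro sum.cong refl) (simp add: sum_distrib_left sum_distrib_right dd_sym mult_ac)
    also have "\<dots> = (AA * 2 powr p) * (\<Sum>i<L. E i * (\<Sum>m<Mb. rho ^ dd i m))"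
      by (simp add: sum_distrib_left)
    finally show ?thesis .
  qed
  also have "D powr (p - 1) * ((AA * 2 powr p) * (\<Sum>i<L. E i * (\<Sum>m<Mb. rho ^ dd i m))) = D powr (p - 1) * (AA * 2 powr p) * (\<Sum>i<L. E i * (\<Sum>m<Mb. rho ^ dd i m))"
    by simp
  also have "\<dots> \<le> D powr (p - 1) * (AA * 2 powr p) * (\<Sum>i<L. E i * D)"
    using geo_dd rho_pos rho_lt1 E0 AA1 unfolding D_def
    by (intro mult_left_mono sum_mono) auto
  also have "(\<Sum>i<L. E i * D) = D * (\<Sum>i<L. E i)" by (simp add: sum_distrib_left mult.commute)
  also have "D powr (p - 1) * (AA * 2 powr p) * (D * (\<Sum>i<L. E i)) = C0 * (\<Sum>i<L. E i)"
  proof -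
    have "D powr (p - 1) * D = D powr p" using D0 by (simp add: powr_diff)
    then show ?thesis unfolding C0_def D_def[symmetric] by (simp add: mult_ac)
  qed
  also have "(\<Sum>i<L. E i) = (\<Sum>j\<in>{1..<2^L}. w j * \<bar>f j\<bar> powr p)"
    unfolding E_def by (rule sum_dyadic[symmetric])
  finally show ?thesis unfolding T_def .
qed

end


definition psum :: "real \<Rightarrow> (nat \<Rightarrow> real) \<Rightarrow> (nat \<Rightarrow> real) \<Rightarrow> real" where
  "psum q v f = (\<Sum>k. v (Suc k) * \<bar>f (Suc k)\<bar> powr q)"
definition lpp :: "real \<Rightarrow> (nat \<Rightarrow> real) \<Rightarrow> (nat \<Rightarrow> real) \<Rightarrow> bool" where
  "lpp q v f = summable (\<lambda>k. v (Suc k) * \<bar>f (Suc k)\<bar> powr q)"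

lemma sum_shift1: "(\<Sum>j\<in>{1..<Suc n}. g j) = (\<Sum>j<n. g (Suc j))"
  by (metis One_nat_def atLeast0LessThan sum.shift_bounds_Suc_ivl)

lemma fin_le_psum:
  assumes "lpp q v f" "\<And>k. k \<ge> 1 \<Longrightarrow> v k \<ge> 0"
  shows "(\<Sum>j\<in>{1..<n}. v j * \<bar>f j\<bar> powr q) \<le> psum q v f"
proof (cases n)
  case 0
  then have "(\<Sum>j\<in>{1..<n}. v j * \<bar>f j\<bar> powr q) = 0" by simp
  moreover have "psum q v f \<ge> 0" unfolding psum_def using assms
    by (intro suminf_nonneg) (auto simp: lpp_def)
  ultimately show ?thesis by simp
next
  case (Suc m)
  have "(\<Sum>j\<in>{1..<n}. v j * \<bar>f j\<bar> powr q) = (\<Sum>j<m. v (Suc j) * \<bar>f (Suc j)\<bar> powr q)"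
    unfolding Suc by (rule sum_shift1)
  also have "\<dots> \<le> psum q v f" unfolding psum_def using assms
    by (intro sum_le_suminf) (auto simp: lpp_def)
  finally show ?thesis .
qed

lemma psum_le_bound:
  assumes "\<And>k. k \<ge> 1 \<Longrightarrow> v k * \<bar>f k\<bar> powr q \<ge> 0"
    and "\<And>n. (\<Sum>j\<in>{1..<n}. v j * \<bar>f j\<bar> powr q) \<le> B"
  shows "lpp q v f" "psum q v f \<le> B"
proof -
  have nn: "\<And>k. v (Suc k) * \<bar>f (Suc k)\<bar> powr q \<ge> 0" using assms(1) by simp
  have b: "(\<Sum>k<n. v (Suc k) * \<bar>f (Suc k)\<bar> powr q) \<le> B" for n
    using assms(2)[of "Suc n"] unfolding sum_shift1 .
  show "lpp q v f" unfolding lpp_def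
  proof (rule bounded_imp_summable[OF nn])
    fix n show "(\<Sum>k\<le>n. v (Suc k) * \<bar>f (Suc k)\<bar> powr q) \<le> B"
      using b[of "Suc n"] by (simp add: lessThan_Suc_atMost)
  qed
  then show "psum q v f \<le> B" unfolding psum_def lpp_def
    by (intro suminf_le_const b)
qed

context
  fixes p :: real and w :: "nat \<Rightarrow> real"
  assumes p1: "p > 1" and wA: "in_Ap p w"
begin

lemma main_gen:
  "(\<Sum>k\<in>{1..<K}. w k * (\<Sum>j\<in>{1..<L}. \<bar>f j\<bar> / real (max j k)) powr p)
     \<le> C0 p w * (\<Sum>j\<in>{1..<L}. w j * \<bar>f j\<bar> powr p)"
proof -
  define f' where "f' j = (if j < L then f j else 0)" for j
  have LL: "L \<le> 2^L" "K \<le> 2^K" by (simp_all add: less_imp_le)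
  have e1: "(\<Sum>j\<in>{1..<L}. \<bar>f j\<bar> / real (max j k)) = (\<Sum>j\<in>{1..<2^L}. \<bar>f' j\<bar> / real (max j k))" for k
    using LL by (intro sum.mono_neutral_cong_left) (auto simp: f'_def)
  have e2: "(\<Sum>j\<in>{1..<L}. w j * \<bar>f j\<bar> powr p) = (\<Sum>j\<in>{1..<2^L}. w j * \<bar>f' j\<bar> powr p)"
    using LL by (intro sum.mono_neutral_cong_left) (auto simp: f'_def)
  have "(\<Sum>k\<in>{1..<K}. w k * (\<Sum>j\<in>{1..<L}. \<bar>f j\<bar> / real (max j k)) powr p)
      \<le> (\<Sum>k\<in>{1..<2^K}. w k * (\<Sum>j\<in>{1..<L}. \<bar>f j\<bar> / real (max j k)) powr p)"
    using LL wnn[OF p1 wA] by (intro sum_mono2) auto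
  also have "\<dots> \<le> C0 p w * (\<Sum>j\<in>{1..<L}. w j * \<bar>f j\<bar> powr p)"
    unfolding e1 e2 by (rule main_fin[OF p1 wA])
  finally show ?thesis .
qed

lemma C0_pos: "C0 p w > 0"
  unfolding C0_def[OF p1 wA] using AA1[OF p1 wA] rho_lt1[OF p1 wA] by simp

lemma maxop_main:
  assumes f: "lpp p w f"
  shows "\<And>k. bdd_above (avg f ` {k..})" "\<And>k. maxop f k \<ge> 0" "lpp p w (maxop f)"
    "psum p w (maxop f) \<le> C0 p w * psum p w f"
proof -
  define P where "P = psum p w f"
  define C where "C = C0 p w"
  have C0: "C > 0" unfolding C_def by (rule C0_pos)
  define T where "T L k = (\<Sum>j\<in>{1..<L}. \<bar>f j\<bar> / real (max j k))" for L k
  have T0: "T L k \<ge> 0" for L k unfolding T_def by (intro sum_nonneg) auto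
  have fin: "(\<Sum>j\<in>{1..<L}. w j * \<bar>f j\<bar> powr p) \<le> P" for L
    unfolding P_def using f wnn[OF p1 wA] by (intro fin_le_psum) auto
  have P0: "P \<ge> 0" using fin[of 0] by simp
  have single: "w k * T L k powr p \<le> C * P" if k: "k \<ge> 1" for k L
  proof -
    have "w k * T L k powr p \<le> (\<Sum>k'\<in>{1..<Suc k}. w k' * T L k' powr p)"
      using k wnn[OF p1 wA] by (intro member_le_sum) auto
    also have "\<dots> \<le> C * (\<Sum>j\<in>{1..<L}. w j * \<bar>f j\<bar> powr p)"
      unfolding T_def C_def by (rule main_gen)
    also have "\<dots> \<le> C * P" using fin C0 by (intro mult_left_mono) auto
    finally show ?thesis .
  qed
  have Tb: "T L k \<le> (C * P / w k) powr (1/p)" if k: "k \<ge> 1" for k L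
  proof -
    have wk: "w k > 0" using wpos[OF p1 wA k] .
    have "T L k = (T L k powr p) powr (1/p)" using T0[of L k] p1 by (simp add: powr_powr)
    also have "\<dots> \<le> (C * P / w k) powr (1/p)"
      using single[OF k, of L] wk T0[of L k] p1 by (intro powr_mono2) (auto simp: field_simps)
    finally show ?thesis .
  qed
  have avg_le: "avg f n \<le> T (Suc n) k" if "k \<ge> 1" "n \<ge> k" for k n
  proof -
    have n0: "real n > 0" using that by simp
    have "avg f n = (\<Sum>j\<in>{1..<Suc n}. \<bar>f j\<bar> / real n)"
      unfolding avg_def by (simp add: sum_divide_distrib atLeastLessThanSuc_atLeastAtMost)
    also have "\<dots> \<le> T (Suc n) k" unfolding T_def
    proof (intro sum_mono divide_left_mono)
      fix j assume "j \<in> {1..<Suc n}"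
      then show "real (max j k) \<le> real n" "0 < real n * real (max j k)" using that by auto
    qed auto
    finally show ?thesis .
  qed
  have avg_nn: "avg f n \<ge> 0" for n unfolding avg_def by (intro divide_nonneg_nonneg sum_nonneg) auto
  define B1 where "B1 = (C * P / w 1) powr (1/p)"
  have avg_B1: "avg f n \<le> B1" for n
  proof (cases "n = 0")
    case True then show ?thesis unfolding B1_def avg_def by simp
  next
    case False
    then have "avg f n \<le> T (Suc n) 1" by (intro avg_le) auto
    also have "\<dots> \<le> B1" unfolding B1_def by (rule Tb) simp
    finally show ?thesis .
  qed
  show bdd: "bdd_above (avg f ` {k..})" for k by (rule bdd_aboveI2[of _ _ B1]) (rule avg_B1)
  show mnn: "maxop f k \<ge> 0" for k
  proof -
    have "avg f k \<le> maxop f k" unfolding maxop_def by (rule cSUP_upper) (auto intro: bdd)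
    then show ?thesis using avg_nn[of k] by simp
  qed
  define tau where "tau k = (SUP L. T L k)" for k
  have Tinc: "incseq (\<lambda>L. T L k)" for k
    unfolding incseq_def T_def by (auto intro!: sum_mono2)
  have Tbdd: "bdd_above (range (\<lambda>L. T L k))" if "k \<ge> 1" for k
    by (rule bdd_aboveI2[of _ _ "(C * P / w k) powr (1/p)"]) (rule Tb[OF that])
  have mt: "maxop f k \<le> tau k" if k: "k \<ge> 1" for k
    unfolding maxop_def
  proof (rule cSUP_least)
    fix n assume "n \<in> {k..}"
    then have "avg f n \<le> T (Suc n) k" using k by (intro avg_le) auto
    also have "\<dots> \<le> tau k" unfolding tau_def by (rule cSUP_upper) (auto intro: Tbdd k)
    finally show "avg f n \<le> tau k" .
  qed auto
  have tau0: "tau k \<ge> 0" if "k \<ge> 1" for k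
    using mt[OF that] mnn[of k] by simp
  have sumtau: "(\<Sum>k\<in>{1..<K}. w k * tau k powr p) \<le> C * P" for K
  proof (rule LIMSEQ_le_const2)
    show "(\<lambda>L. \<Sum>k\<in>{1..<K}. w k * T L k powr p) \<longlonglongrightarrow> (\<Sum>k\<in>{1..<K}. w k * tau k powr p)"
    proof (intro tendsto_sum tendsto_mult_left tendsto_powr')
      fix k assume k: "k \<in> {1..<K}"
      show "(\<lambda>L. T L k) \<longlonglongrightarrow> tau k" unfolding tau_def
        using k by (intro LIMSEQ_incseq_SUP Tbdd Tinc) auto
      show "tau k \<noteq> 0 \<or> 0 < p \<and> (\<forall>\<^sub>F L in sequentially. 0 \<le> T L k)"
        using p1 T0 by auto
    qed auto
    show "\<exists>N. \<forall>L\<ge>N. (\<Sum>k\<in>{1..<K}. w k * T L k powr p) \<le> C * P"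
    proof (intro exI allI impI)
      fix L
      have "(\<Sum>k\<in>{1..<K}. w k * T L k powr p) \<le> C * (\<Sum>j\<in>{1..<L}. w j * \<bar>f j\<bar> powr p)"
        unfolding T_def C_def by (rule main_gen)
      also have "\<dots> \<le> C * P" using fin C0 by (intro mult_left_mono) auto
      finally show "(\<Sum>k\<in>{1..<K}. w k * T L k powr p) \<le> C * P" .
    qed
  qed
  have bound: "(\<Sum>j\<in>{1..<n}. w j * \<bar>maxop f j\<bar> powr p) \<le> C * P" for n
  proof -
    have "(\<Sum>j\<in>{1..<n}. w j * \<bar>maxop f j\<bar> powr p) \<le> (\<Sum>j\<in>{1..<n}. w j * tau j powr p)"
      using mnn mt wnn[OF p1 wA] p1 by (intro sum_mono mult_left_mono powr_mono2) auto
    also have "\<dots> \<le> C * P" by (rule sumtau)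
    finally show ?thesis .
  qed
  have nnt: "w k * \<bar>maxop f k\<bar> powr p \<ge> 0" if "k \<ge> 1" for k
    using wnn[OF p1 wA that] by simp
  show "lpp p w (maxop f)" by (rule psum_le_bound(1)[OF nnt bound]) auto
  show "psum p w (maxop f) \<le> C0 p w * psum p w f"
    using psum_le_bound(2)[OF nnt bound] unfolding C_def P_def by auto
qed

end


lemma wnorm_alt: "wnorm q v f = (if lpp q v f then ereal (psum q v f powr (1/q)) else \<infinity>)"
  unfolding wnorm_def lpp_def psum_def by simp

lemma psum_nn: "(\<And>k. k \<ge> 1 \<Longrightarrow> v k \<ge> 0) \<Longrightarrow> lpp q v f \<Longrightarrow> psum q v f \<ge> 0"
  unfolding psum_def lpp_def by (intro suminf_nonneg) auto

lemma SUP_div: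
  fixes g :: "'a \<Rightarrow> real"
  assumes "A \<noteq> {}" "bdd_above (g ` A)" "t > 0"
  shows "(SUP x\<in>A. g x / t) = (SUP x\<in>A. g x) / t"
proof (rule antisym)
  show "(SUP x\<in>A. g x / t) \<le> (SUP x\<in>A. g x) / t"
  proof (rule cSUP_least)
    fix x assume "x \<in> A"
    then have "g x \<le> (SUP x\<in>A. g x)" using assms by (intro cSUP_upper) auto
    then show "g x / t \<le> (SUP x\<in>A. g x) / t" using assms by (simp add: divide_right_mono)
  qed (use assms in auto)
  have bdd: "bdd_above ((\<lambda>x. g x / t) ` A)"
  proof (rule bdd_aboveI2[of _ _ "(SUP x\<in>A. g x) / t"])
    fix x assume "x \<in> A"
    then have "g x \<le> (SUP x\<in>A. g x)" using assms by (intro cSUP_upper) auto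
    then show "g x / t \<le> (SUP x\<in>A. g x) / t" using assms by (simp add: divide_right_mono)
  qed
  have "(SUP x\<in>A. g x) \<le> t * (SUP x\<in>A. g x / t)"
  proof (rule cSUP_least)
    fix x assume "x \<in> A"
    then have "g x / t \<le> (SUP x\<in>A. g x / t)" using bdd by (intro cSUP_upper) auto
    then show "g x \<le> t * (SUP x\<in>A. g x / t)" using assms by (simp add: divide_le_eq mult.commute)
  qed (use assms in auto)
  then show "(SUP x\<in>A. g x) / t \<le> (SUP x\<in>A. g x / t)" using assms by (simp add: divide_le_eq mult.commute)
qed

lemma avg_div: "t > 0 \<Longrightarrow> avg (\<lambda>k. f k / t) n = avg f n / t"
  unfolding avg_def by (simp add: sum_divide_distrib[symmetric])

lemma maxop_div:
  assumes "t > 0" "bdd_above (avg f ` {k..})"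
  shows "maxop (\<lambda>k. f k / t) k = maxop f k / t"
  unfolding maxop_def avg_div[OF assms(1)] using assms by (intro SUP_div) auto

lemma psum_div:
  assumes "t > 0" "lpp q v f"
  shows "lpp q v (\<lambda>k. f k / t)" "psum q v (\<lambda>k. f k / t) = psum q v f / t powr q"
proof -
  have e: "v (Suc k) * \<bar>f (Suc k) / t\<bar> powr q = v (Suc k) * \<bar>f (Suc k)\<bar> powr q / t powr q" for k
    using assms by (simp add: powr_divide)
  show "lpp q v (\<lambda>k. f k / t)" using assms unfolding lpp_def e by (intro summable_divide) auto
  show "psum q v (\<lambda>k. f k / t) = psum q v f / t powr q"
    using assms unfolding lpp_def psum_def e by (intro suminf_divide) auto
qed

lemma rootp: "x \<ge> 0 \<Longrightarrow> q > 0 \<Longrightarrow> (x powr (1/q)) powr q = (x::real)"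
  by (simp add: powr_powr)

lemma pow_le_root: "x \<ge> 0 \<Longrightarrow> q > 0 \<Longrightarrow> x powr (1/q) \<le> y \<Longrightarrow> (x::real) \<le> y powr q"
proof -
  assume a: "x \<ge> 0" "q > 0" "x powr (1/q) \<le> y"
  have "x = (x powr (1/q)) powr q" using rootp a by simp
  also have "\<dots> \<le> y powr q" using a by (intro powr_mono2) auto
  finally show ?thesis .
qed

lemma pow_le1: "x \<ge> 0 \<Longrightarrow> q > 0 \<Longrightarrow> x powr (1/q) \<le> 1 \<Longrightarrow> (x::real) \<le> 1"
  using pow_le_root[of x q 1] by simp

context
  fixes p :: real and w :: "nat \<Rightarrow> real"
  assumes p1: "p > 1" and wA: "in_Ap p w"
begin

lemma Mnorm_le: "maxop_norm p w \<le> ereal (C0 p w powr (1/p))"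
  unfolding maxop_norm_def
proof (rule SUP_least)
  fix f assume "f \<in> {f. wnorm p w f \<le> 1}"
  then have wf: "wnorm p w f \<le> 1" by simp
  have lf: "lpp p w f"
  proof (rule ccontr)
    assume "\<not> lpp p w f"
    then have "wnorm p w f = \<infinity>" unfolding wnorm_alt by simp
    then show False using wf by simp
  qed
  have ps0: "psum p w f \<ge> 0" using lf wnn[OF p1 wA] by (intro psum_nn) auto
  have pr: "psum p w f powr (1/p) \<le> 1" using wf lf unfolding wnorm_alt by simp
  have ps1: "psum p w f \<le> 1" using pow_le1[OF ps0 _ pr] p1 by simp
  note mm = maxop_main[OF p1 wA lf]
  have pm0: "psum p w (maxop f) \<ge> 0" using mm(3) wnn[OF p1 wA] by (intro psum_nn) auto
  have "psum p w (maxop f) powr (1/p) \<le> (C0 p w * psum p w f) powr (1/p)"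
    using mm(4) pm0 p1 by (intro powr_mono2) auto
  also have "\<dots> \<le> C0 p w powr (1/p)"
  proof -
    have "C0 p w * psum p w f \<le> C0 p w" by (rule mult_left_le) (use ps1 C0_pos[OF p1 wA] in auto)
    then show ?thesis using ps0 C0_pos[OF p1 wA] p1 by (intro powr_mono2) auto
  qed
  finally have "psum p w (maxop f) powr (1/p) \<le> C0 p w powr (1/p)" .
  moreover have "wnorm p w (maxop f) = ereal (psum p w (maxop f) powr (1/p))"
    unfolding wnorm_alt using mm(3) by simp
  moreover have "(\<forall>k\<ge>1. bdd_above (avg f ` {k..}))" using mm(1) by auto
  ultimately show "(if \<forall>k\<ge>1. bdd_above (avg f ` {k..}) then wnorm p w (maxop f) else \<infinity>) \<le> ereal (C0 p w powr (1/p))"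
    by simp
qed

lemma Mnorm_ge: "maxop_norm p w \<ge> 1"
proof -
  have w1: "w 1 > 0" using wpos[OF p1 wA] by simp
  define f1 where "f1 (k::nat) = (if k = 1 then w 1 powr (-1/p) else 0)" for k
  have one: "w 1 * \<bar>w 1 powr (-1/p)\<bar> powr p = 1"
  proof -
    have "\<bar>w 1 powr (-1/p)\<bar> powr p = w 1 powr (-1/p * p)" by (simp add: powr_powr)
    also have "-1/p * p = -1" using p1 by simp
    finally show ?thesis using w1 by (simp add: powr_minus_divide)
  qed
  have terms: "(\<lambda>k. w (Suc k) * \<bar>f1 (Suc k)\<bar> powr p) = (\<lambda>k. if k = 0 then 1 else 0)"
    using one by (auto simp: f1_def)
  have s: "(\<lambda>k. w (Suc k) * \<bar>f1 (Suc k)\<bar> powr p) sums 1"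
    unfolding terms using sums_single[of 0 "\<lambda>_. 1::real"] by simp
  have lf: "lpp p w f1" using s unfolding lpp_def by (rule sums_summable)
  have pf: "psum p w f1 = 1" using s unfolding psum_def by (rule sums_unique[symmetric])
  have wf: "wnorm p w f1 \<le> 1" unfolding wnorm_alt using lf pf by simp
  note mm = maxop_main[OF p1 wA lf]
  have "avg f1 1 \<le> maxop f1 1" unfolding maxop_def by (rule cSUP_upper) (auto intro: mm)
  moreover have "avg f1 1 = w 1 powr (-1/p)" unfolding avg_def f1_def by simp
  ultimately have m1: "w 1 powr (-1/p) \<le> maxop f1 1" by simp
  have "1 = w 1 * \<bar>w 1 powr (-1/p)\<bar> powr p" using one by simp
  also have "\<dots> \<le> w 1 * \<bar>maxop f1 1\<bar> powr p"
    using m1 w1 p1 by (intro mult_left_mono powr_mono2) auto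
  also have "\<dots> = (\<Sum>j\<in>{1..<2}. w j * \<bar>maxop f1 j\<bar> powr p)"
  proof -
    have "{1..<2::nat} = {1}" by auto
    then show ?thesis by simp
  qed
  also have "\<dots> \<le> psum p w (maxop f1)" using mm wnn[OF p1 wA] by (intro fin_le_psum) auto
  finally have "1 \<le> psum p w (maxop f1)" .
  then have "1 \<le> psum p w (maxop f1) powr (1/p)" using p1 by (intro ge_one_powr_ge_zero) auto
  then have "1 \<le> wnorm p w (maxop f1)" unfolding wnorm_alt using mm by simp
  also have "wnorm p w (maxop f1) = (if \<forall>k\<ge>1. bdd_above (avg f1 ` {k..}) then wnorm p w (maxop f1) else \<infinity>)"
    using mm by simp
  also have "\<dots> \<le> maxop_norm p w" unfolding maxop_norm_def using wf by (intro SUP_upper) auto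
  finally show ?thesis .
qed

definition "Mn = real_of_ereal (maxop_norm p w)"

lemma Mn: "maxop_norm p w = ereal Mn" "Mn \<ge> 1"
proof -
  have "maxop_norm p w < \<infinity>" using Mnorm_le by (auto intro: le_less_trans)
  then show "maxop_norm p w = ereal Mn" "Mn \<ge> 1" unfolding Mn_def using Mnorm_ge
    by (cases "maxop_norm p w"; auto)+
qed

lemma Mbound:
  assumes lf: "lpp p w f"
  shows "psum p w (maxop f) \<le> Mn powr p * psum p w f"
proof -
  note mm = maxop_main[OF p1 wA lf]
  have ps0: "psum p w f \<ge> 0" using lf wnn[OF p1 wA] by (intro psum_nn) auto
  show ?thesis
  proof (cases "psum p w f = 0")
    case True
    then show ?thesis using mm(4) by simp
  next
    case False
    then have psp: "psum p w f > 0" using ps0 by simp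
    define t where "t = psum p w f powr (1/p)"
    have t0: "t > 0" unfolding t_def using psp by simp
    have tp: "t powr p = psum p w f" unfolding t_def using rootp[of "psum p w f" p] ps0 p1 by simp
    define g where "g k = f k / t" for k
    have lg: "lpp p w g" and pg: "psum p w g = 1"
      using psum_div[OF t0 lf] tp psp unfolding g_def by auto
    have wg: "wnorm p w g \<le> 1" unfolding wnorm_alt using lg pg by simp
    note mg = maxop_main[OF p1 wA lg]
    have mgeq: "maxop g = (\<lambda>k. maxop f k / t)" unfolding g_def
      using t0 mm(1) by (intro ext maxop_div) auto
    have "wnorm p w (maxop g) \<le> maxop_norm p w"
    proof -
      have "wnorm p w (maxop g) = (if \<forall>k\<ge>1. bdd_above (avg g ` {k..}) then wnorm p w (maxop g) else \<infinity>)"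
        using mg by simp
      also have "\<dots> \<le> maxop_norm p w" unfolding maxop_norm_def using wg by (intro SUP_upper) auto
      finally show ?thesis .
    qed
    moreover have "psum p w (maxop g) = psum p w (maxop f) / psum p w f"
      unfolding mgeq using psum_div[OF t0 mm(3)] tp by simp
    ultimately have "(psum p w (maxop f) / psum p w f) powr (1/p) \<le> Mn"
      using mg(3) Mn(1) unfolding wnorm_alt by simp
    moreover have "psum p w (maxop f) \<ge> 0" using mm(3) wnn[OF p1 wA] by (intro psum_nn) auto
    ultimately have "psum p w (maxop f) / psum p w f \<le> Mn powr p"
      using psp p1 pow_le_root[of "psum p w (maxop f) / psum p w f" p Mn] by simp
    then show ?thesis using psp by (simp add: divide_le_eq)
  qed
qed

end


lemma pnp: "(x::real) \<ge> 0 \<Longrightarrow> (x ^ d) powr a = (x powr a) ^ d"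
proof (induction d)
  case 0 then show ?case by simp
next
  case (Suc d) then show ?case by (simp add: powr_mult)
qed

context
  fixes p :: real and w :: "nat \<Rightarrow> real" and h :: "nat \<Rightarrow> real"
  assumes p1: "p > 1" and wA: "in_Ap p w"
    and h0: "\<And>k. h k \<ge> 0" and lh: "lpp p w h" and ph: "psum p w h \<le> 1"
begin

definition "Ti i = (maxop ^^ i) h"

lemma Ti_0: "Ti 0 = h" and Ti_Suc: "Ti (Suc i) = maxop (Ti i)"
  unfolding Ti_def by simp_all

lemma Ti_props: "lpp p w (Ti i) \<and> psum p w (Ti i) \<le> (Mn p w powr p) ^ i \<and> (\<forall>k. Ti i k \<ge> 0)"
proof (induction i)
  case 0 then show ?case using lh ph h0 by (simp add: Ti_0)
next
  case (Suc i)
  then have l: "lpp p w (Ti i)" and ps: "psum p w (Ti i) \<le> (Mn p w powr p) ^ i" by auto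
  note mm = maxop_main[OF p1 wA l]
  have "psum p w (Ti (Suc i)) \<le> Mn p w powr p * psum p w (Ti i)"
    unfolding Ti_Suc by (rule Mbound[OF p1 wA l])
  also have "\<dots> \<le> Mn p w powr p * (Mn p w powr p) ^ i"
    using ps by (intro mult_left_mono) auto
  finally show ?case using mm unfolding Ti_Suc by simp
qed

lemma Ti_lpp: "lpp p w (Ti i)" and Ti_psum: "psum p w (Ti i) \<le> (Mn p w powr p) ^ i"
  and Ti_nn: "Ti i k \<ge> 0"
  using Ti_props by auto

abbreviation "MM \<equiv> Mn p w"

lemma MM1: "MM \<ge> 1" using Mn[OF p1 wA] by simp

lemma Ti_point: "k \<ge> 1 \<Longrightarrow> Ti i k / MM ^ i \<le> (1 / w k) powr (1/p)"
proof -
  assume k: "k \<ge> 1"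
  have wk: "w k > 0" using wpos[OF p1 wA k] .
  have m0: "MM ^ i > 0" using MM1 by simp
  have "w k * \<bar>Ti i k\<bar> powr p \<le> (\<Sum>j\<in>{1..<Suc k}. w j * \<bar>Ti i j\<bar> powr p)"
    using k wnn[OF p1 wA] by (intro member_le_sum) auto
  also have "\<dots> \<le> psum p w (Ti i)" using Ti_lpp wnn[OF p1 wA] by (intro fin_le_psum) auto
  also have "\<dots> \<le> (MM powr p) ^ i" by (rule Ti_psum)
  finally have a: "w k * Ti i k powr p \<le> (MM powr p) ^ i" using Ti_nn by simp
  have "(Ti i k / MM ^ i) powr p = Ti i k powr p / (MM powr p) ^ i"
    using Ti_nn m0 MM1 by (simp add: powr_divide pnp)
  also have "\<dots> \<le> 1 / w k" using a wk MM1 by (simp add: field_simps)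
  finally have b: "(Ti i k / MM ^ i) powr p \<le> 1 / w k" .
  have "Ti i k / MM ^ i = ((Ti i k / MM ^ i) powr p) powr (1/p)"
    using rootp[of "Ti i k / MM ^ i" p] Ti_nn m0 p1 by (simp add: powr_powr)
  also have "\<dots> \<le> (1 / w k) powr (1/p)" using b p1 Ti_nn m0 by (intro powr_mono2) auto
  finally show ?thesis .
qed

definition "term i k = Ti i k / (2 * MM) ^ i"

lemma term_nn: "term i k \<ge> 0" unfolding term_def using Ti_nn MM1 by simp

lemma term_sum: "k \<ge> 1 \<Longrightarrow> summable (\<lambda>i. term i k)"
proof -
  assume k: "k \<ge> 1"
  show ?thesis
  proof (rule summable_comparison_test[OF _ summable_mult2[OF summable_geometric[of "1/2::real"]]])
    show "\<exists>N. \<forall>i\<ge>N. norm (term i k) \<le> (1/2) ^ i * (1 / w k) powr (1/p)"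
    proof (intro exI allI impI)
      fix i :: nat
      have "term i k = (1/2)^i * (Ti i k / MM ^ i)" unfolding term_def
        by (simp add: power_mult_distrib field_simps)
      also have "\<dots> \<le> (1/2)^i * (1 / w k) powr (1/p)" using Ti_point[OF k] by (intro mult_left_mono) auto
      finally show "norm (term i k) \<le> (1/2) ^ i * (1 / w k) powr (1/p)" using term_nn by simp
    qed
  qed (simp_all)
qed

definition "R k = (\<Sum>i. term i k)"

lemma R_nn: "k \<ge> 1 \<Longrightarrow> R k \<ge> 0" unfolding R_def using term_sum term_nn by (intro suminf_nonneg) auto

lemma R_ge_term: "k \<ge> 1 \<Longrightarrow> term i k \<le> R k"
  unfolding R_def using term_sum term_nn by (intro sum_le_suminf[of _ "{i}", simplified]) auto

lemma R_ge_h: "k \<ge> 1 \<Longrightarrow> h k \<le> R k"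
  using R_ge_term[of k 0] unfolding term_def Ti_0 by simp

lemma R_pos:
  assumes hj: "j \<ge> 1" "h j > 0" and k: "k \<ge> 1"
  shows "R k > 0"
proof -
  define n where "n = max j k"
  note mm = maxop_main[OF p1 wA lh]
  have n1: "n \<ge> 1" "n \<ge> k" "j \<in> {1..n}" unfolding n_def using hj k by auto
  have "\<bar>h j\<bar> \<le> (\<Sum>i=1..n. \<bar>h i\<bar>)" using n1 by (intro member_le_sum) auto
  then have "h j \<le> (\<Sum>i=1..n. \<bar>h i\<bar>)" using h0[of j] by simp
  then have "0 < avg h n" unfolding avg_def using hj n1 by (intro divide_pos_pos) auto
  also have "avg h n \<le> maxop h k" unfolding maxop_def using n1 mm(1) by (intro cSUP_upper) auto
  finally have "Ti 1 k > 0" by (simp add: Ti_Suc Ti_0)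
  then have "term 1 k > 0" unfolding term_def using MM1 by simp
  then show ?thesis using R_ge_term[OF k, of 1] by simp
qed

lemma avg_R:
  assumes k: "k \<ge> 1" and n: "n \<ge> k"
  shows "avg R n \<le> 2 * MM * R k"
proof -
  have n1: "n \<ge> 1" using k n by simp
  define G where "G i = (\<Sum>j=1..n. term i j) / real n" for i
  have sj: "summable (\<lambda>i. term i j)" if "j \<in> {1..n}" for j using that term_sum by auto
  have "avg R n = (\<Sum>j=1..n. R j) / real n"
    unfolding avg_def using R_nn by (intro arg_cong2[where f="(/)"] sum.cong) auto
  also have "(\<Sum>j=1..n. R j) = (\<Sum>i. \<Sum>j=1..n. term i j)"
    unfolding R_def using sj by (rule suminf_sum[symmetric])
  also have "(\<Sum>i. \<Sum>j=1..n. term i j) / real n = (\<Sum>i. G i)"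
    unfolding G_def using sj by (intro suminf_divide[symmetric] summable_sum) auto
  finally have eq: "avg R n = (\<Sum>i. G i)" .
  have sG: "summable G" unfolding G_def using sj by (intro summable_divide summable_sum) auto
  have Gle: "G i \<le> 2 * MM * term (Suc i) k" for i
  proof -
    have "G i = avg (Ti i) n / (2 * MM) ^ i"
      unfolding G_def avg_def term_def using Ti_nn by (simp add: sum_divide_distrib[symmetric])
    also have "avg (Ti i) n \<le> maxop (Ti i) k"
      unfolding maxop_def using n maxop_main(1)[OF p1 wA Ti_lpp] by (intro cSUP_upper) auto
    then have "avg (Ti i) n / (2 * MM) ^ i \<le> Ti (Suc i) k / (2 * MM) ^ i"
      unfolding Ti_Suc using MM1 by (intro divide_right_mono) auto
    also have "\<dots> = 2 * MM * term (Suc i) k" unfolding term_def using MM1 by (simp add: field_simps)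
    finally show ?thesis .
  qed
  have sT: "summable (\<lambda>i. term (Suc i) k)" using term_sum[OF k] by (subst summable_Suc_iff)
  have "(\<Sum>i. G i) \<le> (\<Sum>i. 2 * MM * term (Suc i) k)"
    using Gle sG sT by (intro suminf_le summable_mult) auto
  also have "\<dots> = 2 * MM * (\<Sum>i. term (Suc i) k)" using sT by (rule suminf_mult)
  also have "(\<Sum>i. term (Suc i) k) = R k - term 0 k" unfolding R_def using term_sum[OF k] by (rule suminf_split_head)
  also have "2 * MM * (R k - term 0 k) \<le> 2 * MM * R k" using term_nn MM1 by (intro mult_left_mono) auto
  finally show ?thesis using eq by simp
qed

lemma RN_bound: "(\<Sum>k\<in>{1..<K}. w k * (\<Sum>i<N. term i k) powr p) \<le> 2 powr p"
proof -
  have m0: "MM > 0" using MM1 by simp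
  have geo: "(\<Sum>i<N. (1/2::real) ^ i) \<le> 2" using geo_fin[of "1/2" "{..<N}"] by simp
  have pt: "(\<Sum>i<N. term i k) powr p \<le> 2 powr (p - 1) * (\<Sum>i<N. (1/2) ^ i / (MM powr p) ^ i * Ti i k powr p)" for k
  proof -
    have "(\<Sum>i<N. term i k) = (\<Sum>i<N. (1/2) ^ i * (Ti i k / MM ^ i))"
      unfolding term_def by (intro sum.cong) (auto simp: power_mult_distrib field_simps)
    also have "\<dots> powr p \<le> (\<Sum>i<N. (1/2::real) ^ i) powr (p - 1) * (\<Sum>i<N. (1/2) ^ i * (Ti i k / MM ^ i) powr p)"
      using p1 Ti_nn m0 by (intro Jensen_sum) auto
    also have "\<dots> \<le> 2 powr (p - 1) * (\<Sum>i<N. (1/2) ^ i * (Ti i k / MM ^ i) powr p)"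
      using geo p1 Ti_nn m0 by (intro mult_right_mono powr_mono2 sum_nonneg) auto
    also have "(\<Sum>i<N. (1/2::real) ^ i * (Ti i k / MM ^ i) powr p) = (\<Sum>i<N. (1/2) ^ i / (MM powr p) ^ i * Ti i k powr p)"
      using Ti_nn m0 by (intro sum.cong) (auto simp: powr_divide pnp field_simps)
    finally show ?thesis .
  qed
  have "(\<Sum>k\<in>{1..<K}. w k * (\<Sum>i<N. term i k) powr p)
      \<le> (\<Sum>k\<in>{1..<K}. w k * (2 powr (p - 1) * (\<Sum>i<N. (1/2) ^ i / (MM powr p) ^ i * Ti i k powr p)))"
    using wnn[OF p1 wA] pt by (intro sum_mono mult_left_mono) auto
  also have "\<dots> = 2 powr (p - 1) * (\<Sum>i<N. (1/2) ^ i / (MM powr p) ^ i * (\<Sum>k\<in>{1..<K}. w k * Ti i k powr p))"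
  proof -
    have "(\<Sum>k\<in>{1..<K}. w k * (2 powr (p - 1) * (\<Sum>i<N. (1/2) ^ i / (MM powr p) ^ i * Ti i k powr p)))
       = (\<Sum>k\<in>{1..<K}. \<Sum>i<N. 2 powr (p - 1) * ((1/2) ^ i / (MM powr p) ^ i * (w k * Ti i k powr p)))"
      by (simp add: sum_distrib_left mult_ac)
    also have "\<dots> = (\<Sum>i<N. \<Sum>k\<in>{1..<K}. 2 powr (p - 1) * ((1/2) ^ i / (MM powr p) ^ i * (w k * Ti i k powr p)))"
      by (rule sum.swap)
    also have "\<dots> = 2 powr (p - 1) * (\<Sum>i<N. (1/2) ^ i / (MM powr p) ^ i * (\<Sum>k\<in>{1..<K}. w k * Ti i k powr p))"
      by (simp add: sum_distrib_left)
    finally show ?thesis .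
  qed
  also have "\<dots> \<le> 2 powr (p - 1) * (\<Sum>i<N. (1/2) ^ i / (MM powr p) ^ i * (MM powr p) ^ i)"
  proof (rule mult_left_mono, rule sum_mono)
    fix i
    have "(\<Sum>k\<in>{1..<K}. w k * Ti i k powr p) = (\<Sum>k\<in>{1..<K}. w k * \<bar>Ti i k\<bar> powr p)"
      using Ti_nn by simp
    also have "\<dots> \<le> psum p w (Ti i)" using Ti_lpp wnn[OF p1 wA] by (intro fin_le_psum) auto
    also have "\<dots> \<le> (MM powr p) ^ i" by (rule Ti_psum)
    finally show "(1/2) ^ i / (MM powr p) ^ i * (\<Sum>k\<in>{1..<K}. w k * Ti i k powr p) \<le> (1/2) ^ i / (MM powr p) ^ i * (MM powr p) ^ i"
      using m0 by (intro mult_left_mono) auto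
  qed auto
  also have "\<dots> = 2 powr (p - 1) * (\<Sum>i<N. (1/2::real) ^ i)" using m0 by simp
  also have "\<dots> \<le> 2 powr (p - 1) * 2" using geo by (intro mult_left_mono) auto
  also have "\<dots> = 2 powr p" by (simp add: powr_diff)
  finally show ?thesis .
qed

lemma R_bound: "(\<Sum>k\<in>{1..<K}. w k * R k powr p) \<le> 2 powr p"
proof (rule LIMSEQ_le_const2)
  show "(\<lambda>N. \<Sum>k\<in>{1..<K}. w k * (\<Sum>i<N. term i k) powr p) \<longlonglongrightarrow> (\<Sum>k\<in>{1..<K}. w k * R k powr p)"
  proof (intro tendsto_sum tendsto_mult_left tendsto_powr')
    fix k assume k: "k \<in> {1..<K}"
    show "(\<lambda>N. \<Sum>i<N. term i k) \<longlonglongrightarrow> R k" unfolding R_def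
      using k term_sum by (intro summable_LIMSEQ) auto
    show "R k \<noteq> 0 \<or> 0 < p \<and> (\<forall>\<^sub>F N in sequentially. 0 \<le> (\<Sum>i<N. term i k))"
      using p1 term_nn by (auto intro!: always_eventually sum_nonneg)
  qed auto
  show "\<exists>N. \<forall>n\<ge>N. (\<Sum>k\<in>{1..<K}. w k * (\<Sum>i<n. term i k) powr p) \<le> 2 powr p"
    using RN_bound by auto
qed

end


context
  fixes p :: real and w :: "nat \<Rightarrow> real" and h :: "nat \<Rightarrow> real" and j0 :: nat and p0 :: real
  assumes p1: "p > 1" and wA: "in_Ap p w"
    and h0: "\<And>k. h k \<ge> 0" and lh: "lpp p w h" and ph: "psum p w h \<le> 1"
    and j0: "j0 \<ge> 1" "h j0 > 0" and pp0: "p < p0"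
begin

lemmas Rp = R_pos[OF p1 wA h0 lh ph j0]
lemmas avgR = avg_R[OF p1 wA h0 lh ph]
lemmas Rb = R_bound[OF p1 wA h0 lh ph]
lemmas Rh = R_ge_h[OF p1 wA h0 lh ph]

abbreviation "RR \<equiv> R p w h"
abbreviation "M2 \<equiv> 2 * Mn p w"

definition "w0 k = w k * RR k powr (- (p0 - p))"

lemma M2pos: "M2 > 0" using Mn[OF p1 wA] by simp

lemma w0_weight: "is_weight w0"
  unfolding is_weight_def w0_def
proof (intro allI impI)
  fix k :: nat assume k: "k \<ge> 1"
  have "w k > 0" "RR k > 0" using wpos[OF p1 wA k] Rp[OF k] by auto
  then show "0 < w k * RR k powr (- (p0 - p))" by simp
qed

lemma Ap_term_bound:
  assumes n1: "n \<ge> 1"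
  shows "((\<Sum>k=1..n. w0 k) / real n) * ((\<Sum>k=1..n. w0 k powr (- 1 / (p0 - 1))) / real n) powr (p0 - 1)
     \<le> M2 powr (p0 - p) * real_of_ereal (Ap_const p w)"
proof -
  define a where "a = avg RR n"
  define W where "W = (\<Sum>k=1..n. w k)"
  define S where "S = (\<Sum>k=1..n. sig p w k)"
  define SR where "SR = (\<Sum>k=1..n. RR k)"
  have np: "real n > 0" using n1 by simp
  have W0: "W \<ge> 0" unfolding W_def using wnn[OF p1 wA] by (intro sum_nonneg) auto
  have S0: "S \<ge> 0" unfolding S_def by (intro sum_nonneg) (simp add: sig_def)
  have aeq: "a = SR / real n" unfolding a_def avg_def SR_def using Rp
    by (intro arg_cong2[where f="(/)"] sum.cong) (auto simp: less_imp_le)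
  have apos: "a > 0"
  proof -
    have "RR 1 \<le> SR" unfolding SR_def using n1 Rp by (intro member_le_sum) (auto simp: less_imp_le)
    then show ?thesis using Rp[of 1] aeq np by simp
  qed
  have Rlow: "a / M2 \<le> RR k" if "k \<in> {1..n}" for k
    using avgR[of k n] that M2pos unfolding a_def by (simp add: divide_le_eq mult.commute)
  have e0: "- (p0 - p) \<le> 0" using pp0 by simp
  have part1: "(\<Sum>k=1..n. w0 k) \<le> (a / M2) powr (- (p0 - p)) * W"
  proof -
    have "(\<Sum>k=1..n. w0 k) \<le> (\<Sum>k=1..n. w k * (a / M2) powr (- (p0 - p)))"
      unfolding w0_def
    proof (intro sum_mono mult_left_mono)
      fix k assume k: "k \<in> {1..n}"
      show "RR k powr (- (p0 - p)) \<le> (a / M2) powr (- (p0 - p))"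
        using powr_mono2'[OF e0 _ Rlow[OF k]] apos M2pos by simp
      show "0 \<le> w k" using wnn[OF p1 wA] k by simp
    qed
    also have "\<dots> = (a / M2) powr (- (p0 - p)) * W" unfolding W_def by (simp add: sum_distrib_right mult.commute)
    finally show ?thesis .
  qed
  define th where "th = (p - 1) / (p0 - 1)"
  have th: "0 < th" "th < 1" unfolding th_def using p1 pp0 by auto
  have one_th: "1 - th = (p0 - p) / (p0 - 1)" unfolding th_def using pp0 p1 by (simp add: field_simps)
  have split: "w0 k powr (- 1 / (p0 - 1)) = sig p w k powr th * RR k powr (1 - th)" if k: "k \<in> {1..n}" for k
  proof -
    have wk: "w k > 0" using wpos[OF p1 wA] k by simp
    have rk: "RR k > 0" using Rp k by simp
    have "w0 k powr (- 1 / (p0 - 1)) = w k powr (- 1 / (p0 - 1)) * RR k powr (- (p0 - p) * (- 1 / (p0 - 1)))"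
      unfolding w0_def using wk rk by (simp add: powr_mult powr_powr)
    moreover have "sig p w k powr th = w k powr (- 1 / (p0 - 1))"
      unfolding sig_def th_def using wk p1 pp0 by (simp add: powr_powr)
    moreover have "- (p0 - p) * (- 1 / (p0 - 1)) = 1 - th" unfolding one_th using pp0 p1 by (simp add: field_simps)
    ultimately show ?thesis by simp
  qed
  have "(\<Sum>k=1..n. w0 k powr (- 1 / (p0 - 1))) = (\<Sum>k=1..n. sig p w k powr th * RR k powr (1 - th))"
    using split by (intro sum.cong) auto
  also have "\<dots> \<le> S powr th * SR powr (1 - th)"
    unfolding S_def SR_def using th Rp by (intro HT) (auto simp: sig_def less_imp_le)
  finally have h2: "(\<Sum>k=1..n. w0 k powr (- 1 / (p0 - 1))) \<le> S powr th * SR powr (1 - th)" .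
  have SR0: "SR \<ge> 0" using aeq apos np by (simp add: zero_less_divide_iff)
  have "(\<Sum>k=1..n. w0 k powr (- 1 / (p0 - 1))) / real n \<le> (S / real n) powr th * a powr (1 - th)"
  proof -
    have "real n = real n powr th * real n powr (1 - th)" using np by (simp add: powr_add[symmetric])
    then have eq: "S powr th * SR powr (1 - th) / real n = (S / real n) powr th * (SR / real n) powr (1 - th)"
      using np S0 SR0 by (simp add: powr_divide)
    have "(\<Sum>k=1..n. w0 k powr (- 1 / (p0 - 1))) / real n \<le> S powr th * SR powr (1 - th) / real n"
      using h2 np by (intro divide_right_mono) auto
    then show ?thesis using eq aeq by simp
  qed
  then have part2: "((\<Sum>k=1..n. w0 k powr (- 1 / (p0 - 1))) / real n) powr (p0 - 1)
      \<le> ((S / real n) powr th * a powr (1 - th)) powr (p0 - 1)"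
    using pp0 p1 by (intro powr_mono2) (auto intro!: divide_nonneg_nonneg sum_nonneg)
  also have "\<dots> = (S / real n) powr (p - 1) * a powr (p0 - p)"
  proof -
    have "th * (p0 - 1) = p - 1" "(1 - th) * (p0 - 1) = p0 - p" unfolding one_th unfolding th_def using pp0 p1 by (auto simp: field_simps)
    then show ?thesis using S0 np apos by (simp add: powr_mult powr_powr)
  qed
  finally have part2': "((\<Sum>k=1..n. w0 k powr (- 1 / (p0 - 1))) / real n) powr (p0 - 1) \<le> (S / real n) powr (p - 1) * a powr (p0 - p)" .
  have "((\<Sum>k=1..n. w0 k) / real n) * ((\<Sum>k=1..n. w0 k powr (- 1 / (p0 - 1))) / real n) powr (p0 - 1)
      \<le> ((a / M2) powr (- (p0 - p)) * W / real n) * ((S / real n) powr (p - 1) * a powr (p0 - p))"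
    using part1 part2' np W0 by (intro mult_mono divide_right_mono) (auto intro!: divide_nonneg_nonneg sum_nonneg mult_nonneg_nonneg simp: w0_def)
  also have "\<dots> = M2 powr (p0 - p) * ((W / real n) * (S / real n) powr (p - 1))"
  proof -
    have "(a / M2) powr (- (p0 - p)) * a powr (p0 - p) = M2 powr (p0 - p)"
    proof -
      have "(a / M2) powr (- (p0 - p)) = 1 / (a / M2) powr (p0 - p)" by (rule powr_minus_divide)
      also have "(a / M2) powr (p0 - p) = a powr (p0 - p) / M2 powr (p0 - p)"
        using apos M2pos by (intro powr_divide)
      finally have "(a / M2) powr (- (p0 - p)) = M2 powr (p0 - p) / a powr (p0 - p)" by simp
      then show ?thesis using apos by simp
    qed
    then show ?thesis by (simp add: field_simps)
  qed
  also have "\<dots> \<le> M2 powr (p0 - p) * real_of_ereal (Ap_const p w)"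
    using Ap_le[OF wA p1 n1] unfolding W_def S_def by (intro mult_left_mono) auto
  finally show ?thesis .
qed

lemma AA_1: "real_of_ereal (Ap_const p w) \<ge> 1" using Ap_real[OF wA p1] by simp

lemma w0_Ap_le: "Ap_const p0 w0 \<le> ereal (M2 powr (p0 - p) * real_of_ereal (Ap_const p w))"
  unfolding Ap_const_def[of p0 w0] by (rule SUP_least) (use Ap_term_bound in auto)

lemma w0_in_Ap: "in_Ap p0 w0"
  unfolding in_Ap_def using w0_weight w0_Ap_le by (auto intro: le_less_trans)

lemma A0_bounds: "1 \<le> real_of_ereal (Ap_const p0 w0)"
  "real_of_ereal (Ap_const p0 w0) \<le> M2 powr (p0 - p) * real_of_ereal (Ap_const p w)"
proof -
  have p01: "p0 > 1" using p1 pp0 by simp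
  note r = Ap_real[OF w0_in_Ap p01]
  show "1 \<le> real_of_ereal (Ap_const p0 w0)" by (rule r(2))
  show "real_of_ereal (Ap_const p0 w0) \<le> M2 powr (p0 - p) * real_of_ereal (Ap_const p w)"
    using w0_Ap_le r(1) by (metis ereal_less_eq(3))
qed

lemma g_side:
  assumes c0: "c \<ge> 0" and gb: "\<And>k. k \<ge> 1 \<Longrightarrow> \<bar>g k\<bar> \<le> c * RR k" and lg: "lpp p w g"
  shows "lpp p0 w0 g" "psum p0 w0 g \<le> c powr (p0 - p) * psum p w g"
proof -
  have tm: "w0 k * \<bar>g k\<bar> powr p0 \<le> c powr (p0 - p) * (w k * \<bar>g k\<bar> powr p)" if k: "k \<ge> 1" for k
  proof -
    have wk: "w k > 0" and rk: "RR k > 0" using wpos[OF p1 wA k] Rp[OF k] by auto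
    have "\<bar>g k\<bar> powr p0 = \<bar>g k\<bar> powr p * \<bar>g k\<bar> powr (p0 - p)" by (simp add: powr_add[symmetric])
    also have "\<dots> \<le> \<bar>g k\<bar> powr p * (c * RR k) powr (p0 - p)"
      using gb[OF k] pp0 by (intro mult_left_mono powr_mono2) auto
    also have "\<dots> = \<bar>g k\<bar> powr p * (c powr (p0 - p) * RR k powr (p0 - p))"
      using c0 rk by (simp add: powr_mult)
    finally have "w0 k * \<bar>g k\<bar> powr p0 \<le> w0 k * (\<bar>g k\<bar> powr p * (c powr (p0 - p) * RR k powr (p0 - p)))"
      using w0_weight k unfolding is_weight_def by (intro mult_left_mono) auto
    also have "\<dots> = c powr (p0 - p) * (w k * \<bar>g k\<bar> powr p) * (RR k powr (- (p0 - p)) * RR k powr (p0 - p))"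
      unfolding w0_def by (simp add: mult_ac)
    also have "RR k powr (- (p0 - p)) * RR k powr (p0 - p) = 1" using rk by (simp add: powr_add[symmetric])
    finally show ?thesis by simp
  qed
  have nn: "w0 k * \<bar>g k\<bar> powr p0 \<ge> 0" if "k \<ge> 1" for k
    using w0_weight that unfolding is_weight_def by (simp add: less_imp_le)
  have bnd: "(\<Sum>j\<in>{1..<n}. w0 j * \<bar>g j\<bar> powr p0) \<le> c powr (p0 - p) * psum p w g" for n
  proof -
    have "(\<Sum>j\<in>{1..<n}. w0 j * \<bar>g j\<bar> powr p0) \<le> (\<Sum>j\<in>{1..<n}. c powr (p0 - p) * (w j * \<bar>g j\<bar> powr p))"
      using tm by (intro sum_mono) auto
    also have "\<dots> = c powr (p0 - p) * (\<Sum>j\<in>{1..<n}. w j * \<bar>g j\<bar> powr p)" by (simp add: sum_distrib_left)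
    also have "\<dots> \<le> c powr (p0 - p) * psum p w g"
      using lg wnn[OF p1 wA] by (intro mult_left_mono fin_le_psum) auto
    finally show ?thesis .
  qed
  show "lpp p0 w0 g" by (rule psum_le_bound(1)[OF nn bnd]) auto
  show "psum p0 w0 g \<le> c powr (p0 - p) * psum p w g" by (rule psum_le_bound(2)[OF nn bnd]) auto
qed

lemma f_side:
  assumes lf: "lpp p0 w0 f"
  shows "lpp p w f" "psum p w f \<le> psum p0 w0 f powr (p / p0) * (2 powr p) powr (1 - p / p0)"
proof -
  define t where "t = p / p0"
  have t: "0 < t" "t < 1" unfolding t_def using p1 pp0 by auto
  have F0: "psum p0 w0 f \<ge> 0" using lf w0_weight unfolding is_weight_def by (intro psum_nn) (auto simp: less_imp_le)
  have eq: "w k * \<bar>f k\<bar> powr p = (w0 k * \<bar>f k\<bar> powr p0) powr t * (w k * RR k powr p) powr (1 - t)"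
    if k: "k \<ge> 1" for k
  proof -
    have wk: "w k > 0" and rk: "RR k > 0" using wpos[OF p1 wA k] Rp[OF k] by auto
    have "(w0 k * \<bar>f k\<bar> powr p0) powr t = w k powr t * RR k powr (- (p0 - p) * t) * \<bar>f k\<bar> powr (p0 * t)"
      unfolding w0_def using wk rk by (simp add: powr_mult powr_powr)
    moreover have "(w k * RR k powr p) powr (1 - t) = w k powr (1 - t) * RR k powr (p * (1 - t))"
      using wk rk by (simp add: powr_mult powr_powr)
    moreover have "p0 * t = p" "- (p0 - p) * t + p * (1 - t) = 0" unfolding t_def using pp0 p1 by (auto simp: field_simps)
    ultimately have "(w0 k * \<bar>f k\<bar> powr p0) powr t * (w k * RR k powr p) powr (1 - t)
        = (w k powr t * w k powr (1 - t)) * (RR k powr (- (p0 - p) * t) * RR k powr (p * (1 - t))) * \<bar>f k\<bar> powr p"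
      by (simp add: mult_ac)
    also have "w k powr t * w k powr (1 - t) = w k" using wk by (simp add: powr_add[symmetric])
    also have "RR k powr (- (p0 - p) * t) * RR k powr (p * (1 - t)) = 1"
      using rk \<open>- (p0 - p) * t + p * (1 - t) = 0\<close> by (simp add: powr_add[symmetric])
    finally show ?thesis by simp
  qed
  have nn: "w k * \<bar>f k\<bar> powr p \<ge> 0" if "k \<ge> 1" for k using wnn[OF p1 wA that] by simp
  have bnd: "(\<Sum>j\<in>{1..<n}. w j * \<bar>f j\<bar> powr p) \<le> psum p0 w0 f powr t * (2 powr p) powr (1 - t)" for n
  proof -
    have "(\<Sum>j\<in>{1..<n}. w j * \<bar>f j\<bar> powr p) = (\<Sum>j\<in>{1..<n}. (w0 j * \<bar>f j\<bar> powr p0) powr t * (w j * RR j powr p) powr (1 - t))"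
      using eq by (intro sum.cong) auto
    also have "\<dots> \<le> (\<Sum>j\<in>{1..<n}. w0 j * \<bar>f j\<bar> powr p0) powr t * (\<Sum>j\<in>{1..<n}. w j * RR j powr p) powr (1 - t)"
      using t w0_weight wnn[OF p1 wA] unfolding is_weight_def
      by (intro HT) (auto simp: less_imp_le)
    also have "\<dots> \<le> psum p0 w0 f powr t * (2 powr p) powr (1 - t)"
    proof (intro mult_mono powr_mono2)
      show "(\<Sum>j\<in>{1..<n}. w0 j * \<bar>f j\<bar> powr p0) \<le> psum p0 w0 f"
        using lf w0_weight unfolding is_weight_def by (intro fin_le_psum) (auto simp: less_imp_le)
      show "(\<Sum>j\<in>{1..<n}. w j * RR j powr p) \<le> 2 powr p" by (rule Rb)
      show "0 \<le> (\<Sum>j\<in>{1..<n}. w j * RR j powr p)" using wnn[OF p1 wA] by (intro sum_nonneg) auto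
      show "0 \<le> (\<Sum>j\<in>{1..<n}. w0 j * \<bar>f j\<bar> powr p0)"
        using w0_weight unfolding is_weight_def by (intro sum_nonneg) (auto simp: less_imp_le)
    qed (use t F0 in auto)
    finally show ?thesis .
  qed
  show "lpp p w f" by (rule psum_le_bound(1)[OF nn bnd]) auto
  show "psum p w f \<le> psum p0 w0 f powr (p / p0) * (2 powr p) powr (1 - p / p0)"
    using psum_le_bound(2)[OF nn bnd] unfolding t_def by auto
qed

end


lemma const_in_Ap: "q > 1 \<Longrightarrow> in_Ap q (\<lambda>_. 1)"
proof -
  assume q: "q > 1"
  have "Ap_const q (\<lambda>_. 1) \<le> 1"
    unfolding Ap_const_def
  proof (rule SUP_least)
    fix n :: nat assume "n \<in> {1..}"
    then have "real n > 0" by simp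
    then show "ereal (((\<Sum>k=1..n. (\<lambda>_. 1::real) k) / real n) * ((\<Sum>k=1..n. (\<lambda>_. 1::real) k powr (- 1 / (q - 1))) / real n) powr (q - 1)) \<le> 1"
      by simp
  qed
  then show ?thesis unfolding in_Ap_def is_weight_def by (auto intro: le_less_trans)
qed

lemma psum_zero_iff:
  assumes "lpp q v f" "\<And>k. k \<ge> 1 \<Longrightarrow> v k > 0" "psum q v f = 0"
  shows "\<And>k. k \<ge> 1 \<Longrightarrow> f k = 0"
proof -
  have "\<forall>n. v (Suc n) * \<bar>f (Suc n)\<bar> powr q = 0"
    using assms unfolding lpp_def psum_def
  proof (subst suminf_eq_zero_iff[symmetric])
    fix n
    have "v (Suc n) > 0" using assms(2) by simp
    then show "0 \<le> v (Suc n) * \<bar>f (Suc n)\<bar> powr q" by simp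
  qed (use assms in \<open>auto simp: lpp_def psum_def\<close>)
  then have "f (Suc n) = 0" for n
  proof -
    assume a: "\<forall>n. v (Suc n) * \<bar>f (Suc n)\<bar> powr q = 0"
    have "v (Suc n) > 0" using assms(2) by simp
    moreover have "v (Suc n) * \<bar>f (Suc n)\<bar> powr q = 0" using a by blast
    ultimately show ?thesis by simp
  qed
  then show "f k = 0" if k1: "k \<ge> 1" for k
  proof -
    obtain n where "k = Suc n" using k1 by (cases k) auto
    then show ?thesis using \<open>\<And>n. f (Suc n) = 0\<close> by simp
  qed
qed

lemma zero_lpp:
  assumes "\<And>k. k \<ge> 1 \<Longrightarrow> f k = 0"
  shows "lpp q v f" "psum q v f = 0"
proof -
  have "(\<lambda>k. v (Suc k) * \<bar>f (Suc k)\<bar> powr q) = (\<lambda>_. 0)" using assms by auto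
  then show "lpp q v f" "psum q v f = 0" unfolding lpp_def psum_def by simp_all
qed

theorem theorem3p1:
  fixes p p0 :: real and f g :: "nat \<Rightarrow> real" and \<phi> :: "real \<Rightarrow> real"
  assumes "1 < p" and "p < p0"
    and "\<forall>k\<ge>1. f k \<ge> 0" and "\<forall>k\<ge>1. g k \<ge> 0"
    and "\<forall>t\<ge>1. \<phi> t > 0" and "mono_on {1..} \<phi>"
    and "\<forall>w0. in_Ap p0 w0 \<longrightarrow>
           wnorm p0 w0 f \<le> ereal (\<phi> (real_of_ereal (Ap_const p0 w0))) * wnorm p0 w0 g"
    and "in_Ap p w" and "wnorm p w f < \<infinity>"
  shows "wnorm p w f \<le>
     ereal (2 powr ((p0 - p) / p0) *
            \<phi> ((2 * real_of_ereal (maxop_norm p w)) powr (p0 - p) * real_of_ereal (Ap_const p w)))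
     * wnorm p w g"
proof -
  note p1 = assms(1) and pp0 = assms(2) and phipos = assms(5) and phimono = assms(6)
    and hyp = assms(7) and wA = assms(8) and fin = assms(9)
  have p01: "p0 > 1" using p1 pp0 by simp
  define MN where "MN = real_of_ereal (maxop_norm p w)"
  have MN1: "MN \<ge> 1" unfolding MN_def using Mn[OF p1 wA] Mn_def[OF p1 wA] by simp
  define AW where "AW = real_of_ereal (Ap_const p w)"
  have AW1: "AW \<ge> 1" unfolding AW_def using Ap_real[OF wA p1] by simp
  define arg where "arg = (2 * MN) powr (p0 - p) * AW"
  have arg1: "arg \<ge> 1"
  proof -
    have "1 \<le> (2 * MN) powr (p0 - p)" using MN1 pp0 by (intro ge_one_powr_ge_zero) auto
    then show ?thesis unfolding arg_def using AW1 mult_mono[of 1 "(2 * MN) powr (p0 - p)" 1 AW] by simp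
  qed
  define c where "c = 2 powr ((p0 - p) / p0) * \<phi> arg"
  have c0: "c > 0" unfolding c_def using phipos arg1 by simp
  have goal_eq: "ereal (2 powr ((p0 - p) / p0) *
            \<phi> ((2 * real_of_ereal (maxop_norm p w)) powr (p0 - p) * real_of_ereal (Ap_const p w))) = ereal c"
    unfolding c_def arg_def MN_def AW_def ..
  have lf: "lpp p w f"
  proof (rule ccontr)
    assume "\<not> lpp p w f" then have "wnorm p w f = \<infinity>" unfolding wnorm_alt by simp
    then show False using fin by simp
  qed
  have wpos': "\<And>k. k \<ge> 1 \<Longrightarrow> w k > 0" using wpos[OF p1 wA] .
  have main: "wnorm p w f \<le> ereal c * wnorm p w g"
  proof (cases "lpp p w g")
    case False
    then have "wnorm p w g = \<infinity>" unfolding wnorm_alt by simp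
    then show ?thesis using c0 by simp
  next
    case lg: True
    define G where "G = psum p w g"
    have G0: "G \<ge> 0" unfolding G_def using lg wnn[OF p1 wA] by (intro psum_nn) auto
    show ?thesis
    proof (cases "G = 0")
      case True
      have g0: "\<And>k. k \<ge> 1 \<Longrightarrow> g k = 0"
        using psum_zero_iff[OF lg wpos'] True unfolding G_def by blast
      have "wnorm p0 (\<lambda>_. 1) f \<le> ereal (\<phi> (real_of_ereal (Ap_const p0 (\<lambda>_. 1)))) * wnorm p0 (\<lambda>_. 1) g"
        using hyp const_in_Ap[OF p01] by blast
      also have "wnorm p0 (\<lambda>_. 1) g = 0" unfolding wnorm_alt using zero_lpp[OF g0] by simp
      finally have wf0: "wnorm p0 (\<lambda>_. 1) f \<le> 0" by simp
      have lf1: "lpp p0 (\<lambda>_. 1) f"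
      proof (rule ccontr)
        assume "\<not> lpp p0 (\<lambda>_. 1) f" then show False using wf0 unfolding wnorm_alt by simp
      qed
      have pf0: "psum p0 (\<lambda>_. 1) f \<ge> 0" using lf1 by (intro psum_nn) auto
      have "psum p0 (\<lambda>_. 1) f powr (1 / p0) \<le> 0" using wf0 lf1 unfolding wnorm_alt by simp
      then have "psum p0 (\<lambda>_. 1) f = 0" using pf0 by (metis powr_ge_zero powr_eq_0_iff antisym)
      then have f0: "\<And>k. k \<ge> 1 \<Longrightarrow> f k = 0" using psum_zero_iff[OF lf1] by auto
      have "wnorm p w f = 0" unfolding wnorm_alt using zero_lpp[OF f0] by simp
      moreover have "wnorm p w g = 0" unfolding wnorm_alt using zero_lpp[OF g0] by simp
      ultimately show ?thesis by simp
    next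
      case False
      then have Gp: "G > 0" using G0 by simp
      define s where "s = G powr (1 / p)"
      have s0: "s > 0" unfolding s_def using Gp by simp
      have sp: "s powr p = G" unfolding s_def using rootp[of G p] G0 p1 by simp
      define h where "h k = \<bar>g k\<bar> / s" for k
      have h0: "\<And>k. h k \<ge> 0" unfolding h_def using s0 by simp
      have lga: "lpp p w (\<lambda>k. \<bar>g k\<bar>)" using lg unfolding lpp_def by simp
      have pga: "psum p w (\<lambda>k. \<bar>g k\<bar>) = G" unfolding G_def psum_def by simp
      have lh: "lpp p w h" and ph: "psum p w h = 1"
        using psum_div[OF s0 lga] sp pga Gp unfolding h_def by auto
      obtain j where j: "j \<ge> 1" "h j > 0"
      proof -
        have "\<not> (\<forall>k. k \<ge> 1 \<longrightarrow> g k = 0)"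
        proof
          assume "\<forall>k. k \<ge> 1 \<longrightarrow> g k = 0"
          then have "psum p w g = 0" using zero_lpp by blast
          then show False using Gp unfolding G_def by simp
        qed
        then obtain j where "j \<ge> 1" "g j \<noteq> 0" by auto
        then have "j \<ge> 1" "h j > 0" unfolding h_def using s0 by auto
        then show ?thesis using that by blast
      qed
      have ph': "psum p w h \<le> 1" using ph by simp
      note ctx = p1 wA h0 lh ph' j pp0
      define W0 where "W0 = w0 p w h p0"
      have W0A: "in_Ap p0 W0" unfolding W0_def by (rule w0_in_Ap[OF ctx])
      define A0 where "A0 = real_of_ereal (Ap_const p0 W0)"
      have A01: "A0 \<ge> 1" unfolding A0_def W0_def by (rule A0_bounds(1)[OF ctx])
      have A0arg: "A0 \<le> arg" unfolding A0_def W0_def arg_def MN_def AW_def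
        using A0_bounds(2)[OF ctx] Mn_def[OF p1 wA] by simp
      have phiA: "\<phi> A0 \<le> \<phi> arg" using phimono A01 arg1 A0arg by (auto intro: mono_onD)
      have phiA0: "\<phi> A0 > 0" using phipos A01 by simp
      have gb: "\<bar>g k\<bar> \<le> s * R p w h k" if "k \<ge> 1" for k
      proof -
        have "\<bar>g k\<bar> = s * h k" unfolding h_def using s0 by simp
        also have "\<dots> \<le> s * R p w h k" using R_ge_h[OF p1 wA h0 lh ph' that] s0 by simp
        finally show ?thesis .
      qed
      have lgw: "lpp p0 W0 g" unfolding W0_def by (rule g_side(1)[OF ctx _ gb lg]) (use s0 in simp)
      have pgw: "psum p0 W0 g \<le> s powr (p0 - p) * G" unfolding W0_def G_def
        by (rule g_side(2)[OF ctx _ gb lg]) (use s0 in simp)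
      have pgw0: "psum p0 W0 g \<ge> 0" using lgw W0A unfolding in_Ap_def is_weight_def
        by (intro psum_nn) (auto simp: less_imp_le)
      have sG: "(s powr (p0 - p) * G) powr (1 / p0) = s"
      proof -
        have "s powr (p0 - p) * G = s powr (p0 - p) * s powr p" by (simp add: sp)
        also have "\<dots> = s powr p0" by (simp add: powr_add[symmetric])
        finally have "s powr (p0 - p) * G = s powr p0" .
        then show ?thesis using s0 p01 by (simp add: powr_powr)
      qed
      have pg_le: "psum p0 W0 g powr (1 / p0) \<le> s"
        using pgw pgw0 p01 sG by (metis powr_mono2 less_imp_le zero_less_divide_1_iff less_trans zero_less_one)
      have "wnorm p0 W0 f \<le> ereal (\<phi> A0) * wnorm p0 W0 g" using hyp W0A unfolding A0_def by blast
      also have "wnorm p0 W0 g = ereal (psum p0 W0 g powr (1 / p0))" unfolding wnorm_alt using lgw by simp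
      finally have hw: "wnorm p0 W0 f \<le> ereal (\<phi> A0 * psum p0 W0 g powr (1 / p0))" by simp
      have lfw: "lpp p0 W0 f"
      proof (rule ccontr)
        assume "\<not> lpp p0 W0 f" then show False using hw unfolding wnorm_alt by simp
      qed
      define F0 where "F0 = psum p0 W0 f"
      have F00: "F0 \<ge> 0" unfolding F0_def using lfw W0A unfolding in_Ap_def is_weight_def
        by (intro psum_nn) (auto simp: less_imp_le)
      have "F0 powr (1 / p0) \<le> \<phi> A0 * psum p0 W0 g powr (1 / p0)"
        using hw lfw unfolding wnorm_alt F0_def by simp
      also have "\<dots> \<le> \<phi> arg * s" using phiA phiA0 pg_le by (intro mult_mono) auto
      finally have F0b: "F0 powr (1 / p0) \<le> \<phi> arg * s" .
      have pf: "psum p w f \<le> F0 powr (p / p0) * (2 powr p) powr (1 - p / p0)"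
        unfolding F0_def W0_def by (rule f_side(2)[OF ctx]) (use lfw W0_def in simp)
      have pf0: "psum p w f \<ge> 0" using lf wnn[OF p1 wA] by (intro psum_nn) auto
      have "psum p w f powr (1 / p) \<le> (F0 powr (p / p0) * (2 powr p) powr (1 - p / p0)) powr (1 / p)"
        using pf pf0 p1 by (intro powr_mono2) auto
      also have "\<dots> = F0 powr (1 / p0) * 2 powr ((p0 - p) / p0)"
      proof -
        have "(F0 powr (p / p0)) powr (1 / p) = F0 powr (1 / p0)" using p1 by (simp add: powr_powr)
        moreover have "((2 powr p) powr (1 - p / p0)) powr (1 / p) = 2 powr ((p0 - p) / p0)"
        proof -
          have e: "p * (1 - p / p0) * (1 / p) = (p0 - p) / p0" using p1 p01 by (simp add: field_simps)
           have "(((2::real) powr p) powr (1 - p / p0)) powr (1 / p) = 2 powr (p * (1 - p / p0) * (1 / p))"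
            by (simp only: powr_powr)
          then show ?thesis unfolding e .
        qed
        ultimately show ?thesis using F00 by (simp add: powr_mult)
      qed
      also have "\<dots> \<le> \<phi> arg * s * 2 powr ((p0 - p) / p0)" using F0b by (intro mult_right_mono) auto
      also have "\<dots> = c * s" unfolding c_def by simp
      finally have fin_le: "psum p w f powr (1 / p) \<le> c * s" .
      have "wnorm p w f = ereal (psum p w f powr (1 / p))" unfolding wnorm_alt using lf by simp
      moreover have "wnorm p w g = ereal s" unfolding wnorm_alt s_def G_def using lg by simp
      ultimately show ?thesis using fin_le by simp
    qed
  qed
  then show ?thesis unfolding goal_eq .
qed


end
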